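(* Let $\epsilon\ge0$ and $\gamma\in(0,1)$, and let $A$ be an $\epsilon$-Hannan consistent bandit algorithm. Then the modified algorithm $A^*$ is an $(\epsilon+\gamma)$-Hannan consistent algorithm with guaranteed exploration.
   Context: Adversarial bandit: $K$ arms; at each step $t$ an adaptive adversary fixes rewards $x_k(t)\in[0,1]$, the algorithm picks arm $k(t)$ and observes $x_{k(t)}(t)$. Average external regret $r(t)=\frac1t(\max_k\sum_{s\le t}x_k(s)-\sum_{s\le t}x_{k(s)}(s))$. An algorithm is $\epsilon$-Hannan consistent if against every adversary $\limsup_t r(t)\le\epsilon$ almost surely. It has guaranteed exploration if, when both players of a repeated matrix game use it for action selection, every joint action $(i,j)$ is chosen infinitely often almost surely. The modified algorithm $A^*$ (exploration parameter $\gamma$): at each time $s=1,2,\dots$, with probability $\gamma$ it "explores", i.e. chooses an action uniformly at random among the available actions without updating any internal variables of $A$, and with probability $1-\gamma$ it runs one iteration of $A$ (selection and update). *)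

theory Defs
  imports "HOL-Probability.Probability"
begin

record 's bandit_alg =
  alg_init :: 's
  alg_sel :: "'s \<Rightarrow> ('s \<times> nat) pmf"
  alg_upd :: "'s \<Rightarrow> nat \<Rightarrow> real \<Rightarrow> 's pmf"

definition valid_alg :: "nat \<Rightarrow> 's bandit_alg \<Rightarrow> bool" where
  "valid_alg K A \<longleftrightarrow> (\<forall>s s' k. (s', k) \<in> set_pmf (alg_sel A s) \<longrightarrow> k < K)"

definition bandit_algorithm :: "(nat \<Rightarrow> 's bandit_alg) \<Rightarrow> bool" where
  "bandit_algorithm A \<longleftrightarrow> (\<forall>K\<ge>1. valid_alg K (A K))"

text \<open>Adaptive adversary: the reward vector at time t is a function of the
  arms chosen by the algorithm before time t; rewards lie in [0,1].\<close>
definition valid_adv :: "nat \<Rightarrow> (nat list \<Rightarrow> nat \<Rightarrow> real) \<Rightarrow> bool" where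
  "valid_adv K adv \<longleftrightarrow> (\<forall>h k. k < K \<longrightarrow> 0 \<le> adv h k \<and> adv h k \<le> 1)"

definition bandit_step ::
  "'s bandit_alg \<Rightarrow> (nat list \<Rightarrow> nat \<Rightarrow> real) \<Rightarrow> 's \<times> nat list \<Rightarrow> ('s \<times> nat list) pmf" where
  "bandit_step A adv sh =
     bind_pmf (alg_sel A (fst sh)) (\<lambda>(s', k).
       bind_pmf (alg_upd A s' k (adv (snd sh) k)) (\<lambda>s''.
         return_pmf (s'', snd sh @ [k])))"

primrec bandit_run ::
  "'s bandit_alg \<Rightarrow> (nat list \<Rightarrow> nat \<Rightarrow> real) \<Rightarrow> nat \<Rightarrow> ('s \<times> nat list) pmf" where
  "bandit_run A adv 0 = return_pmf (alg_init A, [])"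
| "bandit_run A adv (Suc t) = bind_pmf (bandit_run A adv t) (bandit_step A adv)"

definition avg_regret :: "nat \<Rightarrow> (nat list \<Rightarrow> nat \<Rightarrow> real) \<Rightarrow> (nat \<Rightarrow> nat) \<Rightarrow> nat \<Rightarrow> real" where
  "avg_regret K adv ks t =
     (Max ((\<lambda>k. \<Sum>s<t. adv (map ks [0..<s]) k) ` {..<K})
       - (\<Sum>s<t. adv (map ks [0..<s]) (ks s))) / real t"

definition law_of :: "(nat \<Rightarrow> 'a) measure \<Rightarrow> (nat \<Rightarrow> 'a list pmf) \<Rightarrow> bool" where
  "law_of M P \<longleftrightarrow> prob_space M
     \<and> sets M = sets (PiM UNIV (\<lambda>_::nat. count_space (UNIV :: 'a set)))
     \<and> (\<forall>t. distr M (count_space UNIV) (\<lambda>\<omega>. map \<omega> [0..<t]) = measure_pmf (P t))"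

definition hannan_consistent :: "real \<Rightarrow> (nat \<Rightarrow> 's bandit_alg) \<Rightarrow> bool" where
  "hannan_consistent \<epsilon> A \<longleftrightarrow>
     (\<forall>K adv M. 1 \<le> K \<longrightarrow> valid_adv K adv \<longrightarrow>
        law_of M (\<lambda>t. map_pmf snd (bandit_run (A K) adv t)) \<longrightarrow>
        (AE \<omega> in M. limsup (\<lambda>t. ereal (avg_regret K adv \<omega> t)) \<le> ereal \<epsilon>))"

definition game_step ::
  "'s bandit_alg \<Rightarrow> 's bandit_alg \<Rightarrow> (nat \<Rightarrow> nat \<Rightarrow> real) \<Rightarrow> (nat \<Rightarrow> nat \<Rightarrow> real)
    \<Rightarrow> ('s \<times> 's) \<times> (nat \<times> nat) list \<Rightarrow> (('s \<times> 's) \<times> (nat \<times> nat) list) pmf" where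
  "game_step A1 A2 u1 u2 sh =
     bind_pmf (alg_sel A1 (fst (fst sh))) (\<lambda>(s1', i).
     bind_pmf (alg_sel A2 (snd (fst sh))) (\<lambda>(s2', j).
     bind_pmf (alg_upd A1 s1' i (u1 i j)) (\<lambda>s1''.
     bind_pmf (alg_upd A2 s2' j (u2 i j)) (\<lambda>s2''.
       return_pmf ((s1'', s2''), snd sh @ [(i, j)])))))"

primrec game_run ::
  "'s bandit_alg \<Rightarrow> 's bandit_alg \<Rightarrow> (nat \<Rightarrow> nat \<Rightarrow> real) \<Rightarrow> (nat \<Rightarrow> nat \<Rightarrow> real)
    \<Rightarrow> nat \<Rightarrow> (('s \<times> 's) \<times> (nat \<times> nat) list) pmf" where
  "game_run A1 A2 u1 u2 0 = return_pmf ((alg_init A1, alg_init A2), [])"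
| "game_run A1 A2 u1 u2 (Suc t) = bind_pmf (game_run A1 A2 u1 u2 t) (game_step A1 A2 u1 u2)"

definition guaranteed_exploration :: "(nat \<Rightarrow> 's bandit_alg) \<Rightarrow> bool" where
  "guaranteed_exploration A \<longleftrightarrow>
     (\<forall>K1 K2 u1 u2 M. 1 \<le> K1 \<longrightarrow> 1 \<le> K2 \<longrightarrow>
        (\<forall>i j. i < K1 \<longrightarrow> j < K2 \<longrightarrow> 0 \<le> u1 i j \<and> u1 i j \<le> 1 \<and> 0 \<le> u2 i j \<and> u2 i j \<le> 1) \<longrightarrow>
        law_of M (\<lambda>t. map_pmf snd (game_run (A K1) (A K2) u1 u2 t)) \<longrightarrow>
        (AE \<omega> in M. \<forall>i<K1. \<forall>j<K2. infinite {t. \<omega> t = (i, j)}))"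

text \<open>The flag records
  whether the pending update belongs to an iteration of A.\<close>
definition explore_alg :: "real \<Rightarrow> nat \<Rightarrow> 's bandit_alg \<Rightarrow> ('s \<times> bool) bandit_alg" where
  "explore_alg \<gamma> K A =
     \<lparr> alg_init = (alg_init A, False),
       alg_sel = (\<lambda>(s, b). bind_pmf (bernoulli_pmf \<gamma>) (\<lambda>e.
                   if e then map_pmf (\<lambda>k. ((s, False), k)) (pmf_of_set {..<K})
                   else map_pmf (\<lambda>(s', k). ((s', True), k)) (alg_sel A s))),
       alg_upd = (\<lambda>(s, b) k x. if b then map_pmf (\<lambda>s'. (s', False)) (alg_upd A s k x)
                               else return_pmf (s, False)) \<rparr>"

definition mod_alg :: "real \<Rightarrow> (nat \<Rightarrow> 's bandit_alg) \<Rightarrow> nat \<Rightarrow> ('s \<times> bool) bandit_alg" where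
  "mod_alg \<gamma> A = (\<lambda>K. explore_alg \<gamma> K (A K))"

end

theory Submission
  imports Defs
begin


lemma space_PS[simp]: "space (PiM (UNIV::nat set) (\<lambda>_. count_space (UNIV::'a set))) = UNIV"
  by (auto simp: space_PiM)

lemma meas_prefix:
  assumes "{0..<t} \<subseteq> I"
  shows "(\<lambda>\<omega>. map \<omega> [0..<t]) \<in> measurable (PiM I (\<lambda>_. count_space (UNIV::'a::countable set))) (count_space UNIV)"
  using assms
proof (induction t)
  case 0 then show ?case by simp
next
  case (Suc t)
  have eq: "(\<lambda>\<omega>. map \<omega> [0..<Suc t]) = (\<lambda>p. fst p @ [snd p]) \<circ> (\<lambda>\<omega>::nat\<Rightarrow>'a. (map \<omega> [0..<t], \<omega> t))" by auto
  have t: "t \<in> I" using Suc.prems by auto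
  have sub: "{0..<t} \<subseteq> I" using Suc.prems by (auto simp: subset_iff)
  have ih: "(\<lambda>\<omega>::nat\<Rightarrow>'a. map \<omega> [0..<t]) \<in> measurable (PiM I (\<lambda>_. count_space UNIV)) (count_space UNIV)"
    by (rule Suc.IH[OF sub])
  have "(\<lambda>\<omega>::nat\<Rightarrow>'a. (map \<omega> [0..<t], \<omega> t)) \<in> measurable (PiM I (\<lambda>_. count_space UNIV)) (count_space UNIV \<Otimes>\<^sub>M count_space UNIV)"
    by (intro measurable_Pair ih measurable_component_singleton t)
  then have "(\<lambda>\<omega>::nat\<Rightarrow>'a. (map \<omega> [0..<t], \<omega> t)) \<in> measurable (PiM I (\<lambda>_. count_space UNIV)) (count_space (UNIV \<times> UNIV))"
    by (simp add: pair_measure_countable)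
  then show ?case unfolding eq by (rule measurable_comp) simp
qed

lemma meas_via_prefix:
  assumes "{0..<t} \<subseteq> I" "\<And>xs. g xs \<in> space N"
  shows "(\<lambda>\<omega>. g (map \<omega> [0..<t])) \<in> measurable (PiM I (\<lambda>_. count_space (UNIV::'a::countable set))) N"
  by (rule measurable_compose[OF meas_prefix[OF assms(1)]]) (use assms(2) in auto)

lemma law_ofD:
  assumes "law_of M P"
  shows "prob_space M" "sets M = sets (PiM UNIV (\<lambda>_::nat. count_space (UNIV::'a set)))"
    "space M = UNIV"
    "distr M (count_space UNIV) (\<lambda>\<omega>. map \<omega> [0..<t]) = measure_pmf (P t)"
  using assms unfolding law_of_def
  by (auto dest: sets_eq_imp_space_eq)

lemma law_meas_prefix:
  assumes "law_of M (P :: nat \<Rightarrow> 'a::countable list pmf)"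
  shows "(\<lambda>\<omega>. map \<omega> [0..<t]) \<in> measurable M (count_space UNIV)"
  by (subst measurable_cong_sets[OF law_ofD(2)[OF assms] refl]) (rule meas_prefix, simp)

lemma law_emeasure:
  assumes "law_of M (P :: nat \<Rightarrow> 'a::countable list pmf)"
  shows "emeasure M {\<omega>. map \<omega> [0..<t] \<in> S} = emeasure (measure_pmf (P t)) S"
proof -
  have "emeasure (measure_pmf (P t)) S = emeasure (distr M (count_space UNIV) (\<lambda>\<omega>. map \<omega> [0..<t])) S"
    using law_ofD(4)[OF assms] by simp
  also have "\<dots> = emeasure M ((\<lambda>\<omega>. map \<omega> [0..<t]) -` S \<inter> space M)"
    by (rule emeasure_distr[OF law_meas_prefix[OF assms]]) simp
  finally show ?thesis using law_ofD(3)[OF assms] by (simp add: vimage_def)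
qed

lemma law_unique:
  assumes "law_of M (P :: nat \<Rightarrow> 'a::countable list pmf)" "law_of M' P"
  shows "M = M'"
proof (rule measure_eqI_PiM_infinite[where I=UNIV and M="\<lambda>_. count_space UNIV"])
  show "sets M = sets (PiM UNIV (\<lambda>_::nat. count_space (UNIV::'a set)))"
       "sets M' = sets (PiM UNIV (\<lambda>_::nat. count_space (UNIV::'a set)))"
    using law_ofD(2) assms by auto
  show "finite_measure M" using law_ofD(1)[OF assms(1)] by (simp add: prob_space_def)
  fix A :: "nat \<Rightarrow> 'a set" and J assume J: "finite (J::nat set)"
  then obtain t where t: "J \<subseteq> {..<t}" using finite_nat_bounded by blast
  have eq: "prod_emb UNIV (\<lambda>_. count_space UNIV) J (Pi\<^sub>E J A) = {\<omega>. map \<omega> [0..<t] \<in> {xs. \<forall>j\<in>J. xs ! j \<in> A j}}"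
    using t by (auto simp: prod_emb_def PiE_iff subset_iff)
  show "emeasure M (prod_emb UNIV (\<lambda>_. count_space UNIV) J (Pi\<^sub>E J A)) = emeasure M' (prod_emb UNIV (\<lambda>_. count_space UNIV) J (Pi\<^sub>E J A))"
    unfolding eq law_emeasure[OF assms(1)] law_emeasure[OF assms(2)] ..
qed

section \<open>Existence of process laws\<close>

locale consistent_fam =
  fixes P :: "nat \<Rightarrow> 'a::countable list pmf"
  assumes len: "\<And>t xs. xs \<in> set_pmf (P t) \<Longrightarrow> length xs = t"
  assumes cons: "\<And>t. map_pmf (take t) (P (Suc t)) = P t"
begin

definition kern :: "nat \<Rightarrow> 'a list \<Rightarrow> 'a pmf" where
  "kern n xs = (if xs \<in> set_pmf (P n)
     then map_pmf (\<lambda>ys. ys ! n) (cond_pmf (P (Suc n)) {ys. take n ys = xs})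
     else return_pmf undefined)"

lemma set_P: "set_pmf (P n) = take n ` set_pmf (P (Suc n))"
  using cons[of n] by (metis set_map_pmf)

lemma kern_step: "bind_pmf (P n) (\<lambda>xs. map_pmf (\<lambda>k. xs @ [k]) (kern n xs)) = P (Suc n)"
proof -
  have ne: "set_pmf (P (Suc n)) \<inter> {ys. take n ys = xs} \<noteq> {}" if "xs \<in> set_pmf (P n)" for xs
    using that set_P[of n] by auto
  have "bind_pmf (P n) (\<lambda>xs. map_pmf (\<lambda>k. xs @ [k]) (kern n xs))
      = bind_pmf (P n) (\<lambda>xs. cond_pmf (P (Suc n)) {ys. take n ys = xs})"
  proof (rule bind_pmf_cong[OF refl])
    fix xs assume xs: "xs \<in> set_pmf (P n)"
    have "map_pmf (\<lambda>k. xs @ [k]) (kern n xs) = map_pmf (\<lambda>ys. xs @ [ys ! n]) (cond_pmf (P (Suc n)) {ys. take n ys = xs})"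
      using xs by (simp add: kern_def map_pmf_comp)
    also have "\<dots> = map_pmf id (cond_pmf (P (Suc n)) {ys. take n ys = xs})"
    proof (rule map_pmf_cong[OF refl])
      fix ys assume "ys \<in> set_pmf (cond_pmf (P (Suc n)) {ys. take n ys = xs})"
      then have "ys \<in> set_pmf (P (Suc n))" "take n ys = xs" using ne[OF xs] by (auto simp: set_cond_pmf)
      moreover then have "length ys = Suc n" using len by blast
      ultimately have "take (Suc n) ys = take n ys @ [ys ! n]"
        by (intro take_Suc_conv_app_nth) simp
      then show "xs @ [ys ! n] = id ys" using \<open>take n ys = xs\<close> \<open>length ys = Suc n\<close> by simp
    qed
    finally show "map_pmf (\<lambda>k. xs @ [k]) (kern n xs) = cond_pmf (P (Suc n)) {ys. take n ys = xs}" by simp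
  qed
  also have "\<dots> = P (Suc n)"
  proof (rule bind_cond_pmf_cancel)
    show "\<And>x. x \<in> set_pmf (P n) \<Longrightarrow> set_pmf (P (Suc n)) \<inter> {y. take n y = x} \<noteq> {}" using ne by blast
    show "\<And>y. y \<in> set_pmf (P (Suc n)) \<Longrightarrow> set_pmf (P n) \<inter> {x. take n y = x} \<noteq> {}" using set_P[of n] by auto
    fix x y assume "x \<in> set_pmf (P n)" "y \<in> set_pmf (P (Suc n))" "take n y = x"
    show "measure_pmf.prob (P (Suc n)) {y. take n y = x} = measure_pmf.prob (P n) {x'. take n y = x'}"
      using \<open>take n y = x\<close> cons[of n, symmetric] by (simp add: measure_map_pmf vimage_def eq_commute)
  qed
  finally show ?thesis .
qed

end


context consistent_fam begin

lemma exists_law: "\<exists>M. law_of M P"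
proof -
  define Ker where "Ker = (\<lambda>n (x::nat\<Rightarrow>'a). measure_pmf (kern n (map x [0..<n])))"
  have "Ker i \<in> measurable (PiM {0..<i} (\<lambda>_. count_space UNIV)) (subprob_algebra (count_space UNIV))" for i
    unfolding Ker_def by (rule meas_via_prefix[OF order_refl]) (rule measure_pmf_in_subprob_algebra)
  moreover have "prob_space (Ker i x)" for i x unfolding Ker_def by (rule measure_pmf.prob_space_axioms)
  ultimately have IT_ok: "Ionescu_Tulcea Ker (\<lambda>_. count_space (UNIV::'a set))"
    unfolding Ionescu_Tulcea_def by blast
  interpret IT: Ionescu_Tulcea Ker "\<lambda>_. count_space UNIV" by (rule IT_ok)
  let ?u = "\<lambda>_::nat. undefined :: 'a"
  have u: "?u \<in> space (PiM {0..<0} (\<lambda>_. count_space UNIV))" by (simp add: space_PiM)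
  have C: "distr (IT.C 0 t ?u) (count_space UNIV) (\<lambda>\<omega>. map \<omega> [0..<t]) = measure_pmf (P t)" for t
  proof (induction t)
    case 0
    have "P 0 = return_pmf []" using len[of _ 0] by (subst set_pmf_subset_singleton[symmetric]) auto
    then show ?case by (simp add: distr_return return_pmf.rep_eq)
  next
    case (Suc t)
    let ?M = "PiM {0..<t} (\<lambda>_. count_space (UNIV::'a set))"
    have sC: "sets (IT.C 0 t ?u) = sets ?M" using IT.sets_C[OF u, of t] by simp
    have spC: "space (IT.C 0 t ?u) \<noteq> {}"
      using prob_space.not_empty[OF IT.prob_space_C[OF u, of t]] .
    have eP: "IT.eP t \<in> measurable (IT.C 0 t ?u) (subprob_algebra (PiM {0..<Suc t} (\<lambda>_. count_space UNIV)))"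
      by (subst measurable_cong_sets[OF sC refl]) (rule IT.measurable_eP)
    have mC: "(\<lambda>\<omega>. map \<omega> [0..<t]) \<in> measurable (IT.C 0 t ?u) (count_space UNIV)"
      by (subst measurable_cong_sets[OF sC refl]) (rule meas_prefix[OF order_refl])
    define g where "g = (\<lambda>xs. measure_pmf (map_pmf (\<lambda>k. xs @ [k]) (kern t xs)))"
    have g: "g \<in> measurable (count_space UNIV) (subprob_algebra (count_space UNIV))"
      unfolding g_def measurable_count_space_eq1 Pi_def by (simp add: measure_pmf_in_subprob_algebra)
    have "distr (IT.C 0 (Suc t) ?u) (count_space UNIV) (\<lambda>\<omega>. map \<omega> [0..<Suc t])
        = distr (IT.C 0 t ?u \<bind> IT.eP t) (count_space UNIV) (\<lambda>\<omega>. map \<omega> [0..<Suc t])" by simp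
    also have "\<dots> = IT.C 0 t ?u \<bind> (\<lambda>x. distr (IT.eP t x) (count_space UNIV) (\<lambda>\<omega>. map \<omega> [0..<Suc t]))"
      by (rule distr_bind[OF eP spC meas_prefix[OF order_refl]])
    also have "\<dots> = IT.C 0 t ?u \<bind> (\<lambda>x. g (map x [0..<t]))"
    proof (rule bind_cong[OF refl])
      fix x assume x: "x \<in> space (IT.C 0 t ?u)"
      then have xs: "x \<in> space ?M" using sets_eq_imp_space_eq[OF sC] by simp
      have "distr (IT.eP t x) (count_space UNIV) (\<lambda>\<omega>. map \<omega> [0..<Suc t])
          = distr (Ker t x) (count_space UNIV) ((\<lambda>\<omega>. map \<omega> [0..<Suc t]) \<circ> fun_upd x t)"
      proof -
        have sK: "sets (Ker t x) = sets (count_space UNIV)" by (simp add: Ker_def)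
        have f1: "fun_upd x t \<in> measurable (Ker t x) (PiM {0..<Suc t} (\<lambda>_. count_space UNIV))"
          unfolding measurable_cong_sets[OF sK refl] measurable_count_space_eq1
          using xs by (auto simp: space_PiM PiE_iff extensional_def)
        have f2: "(\<lambda>\<omega>. map \<omega> [0..<Suc t]) \<in> measurable (PiM {0..<Suc t} (\<lambda>_. count_space UNIV)) (count_space (UNIV::'a list set))"
          by (rule meas_prefix[OF order_refl])
        show ?thesis unfolding IT.eP_def by (rule distr_distr[OF f2 f1])
      qed
      also have "(\<lambda>\<omega>. map \<omega> [0..<Suc t]) \<circ> fun_upd x t = (\<lambda>k. map x [0..<t] @ [k])"
        by (auto simp: fun_eq_iff)
      also have "distr (Ker t x) (count_space UNIV) (\<lambda>k. map x [0..<t] @ [k]) = g (map x [0..<t])"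
        unfolding Ker_def g_def by (simp add: map_pmf_rep_eq)
      finally show "distr (IT.eP t x) (count_space UNIV) (\<lambda>\<omega>. map \<omega> [0..<Suc t]) = g (map x [0..<t])" .
    qed
    also have "\<dots> = distr (IT.C 0 t ?u) (count_space UNIV) (\<lambda>\<omega>. map \<omega> [0..<t]) \<bind> g"
      by (rule bind_distr[symmetric, OF mC g spC])
    also have "\<dots> = measure_pmf (bind_pmf (P t) (\<lambda>xs. map_pmf (\<lambda>k. xs @ [k]) (kern t xs)))"
      unfolding Suc g_def by (simp add: measure_pmf_bind)
    finally show ?case by (simp add: kern_step)
  qed
  have upto: "IT.up_to {0..<t} = t" for t
    unfolding IT.up_to_def by (rule Least_equality) auto
  have fe: "(\<lambda>\<omega>::nat\<Rightarrow>'a. map \<omega> [0..<t]) \<circ> (\<lambda>x. restrict x {0..<t}) = (\<lambda>\<omega>. map \<omega> [0..<t])" for t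
    by (auto simp: fun_eq_iff)
  have law: "distr IT.PF.lim (count_space UNIV) (\<lambda>\<omega>. map \<omega> [0..<t]) = measure_pmf (P t)" for t
  proof -
    have r: "(\<lambda>x. restrict x {0..<t}) \<in> measurable IT.PF.lim (PiM {0..<t} (\<lambda>_. count_space UNIV))"
      by (subst measurable_cong_sets[OF IT.PF.sets_lim refl]) (rule measurable_restrict_subset, simp)
    have r2: "(\<lambda>x. restrict x {0..<t}) \<in> measurable (IT.C 0 t ?u) (PiM {0..<t} (\<lambda>_. count_space UNIV))"
      by (subst measurable_cong_sets[OF IT.sets_C[OF u] refl]) (rule measurable_restrict_subset, simp)
    have "distr IT.PF.lim (count_space UNIV) (\<lambda>\<omega>. map \<omega> [0..<t])
       = distr (distr IT.PF.lim (PiM {0..<t} (\<lambda>_. count_space UNIV)) (\<lambda>x. restrict x {0..<t})) (count_space UNIV) (\<lambda>\<omega>. map \<omega> [0..<t])"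
      by (simp only: distr_distr[OF meas_prefix[OF order_refl] r] fe)
    also have "\<dots> = distr (IT.CI {0..<t}) (count_space UNIV) (\<lambda>\<omega>. map \<omega> [0..<t])"
      by (simp only: IT.distr_lim finite_atLeastLessThan)
    also have "\<dots> = distr (IT.C 0 t ?u) (count_space UNIV) (\<lambda>\<omega>. map \<omega> [0..<t])"
      unfolding IT.CI_def upto
      by (simp only: distr_distr[OF meas_prefix[OF order_refl] r2] fe)
    finally show ?thesis using C by simp
  qed
  have sets: "sets IT.PF.lim = sets (PiM UNIV (\<lambda>_::nat. count_space (UNIV::'a set)))" by simp
  have ml: "(\<lambda>\<omega>::nat\<Rightarrow>'a. map \<omega> [0..<0]) \<in> measurable IT.PF.lim (count_space UNIV)"
    by (subst measurable_cong_sets[OF sets refl]) (rule meas_prefix, simp)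
  have "prob_space IT.PF.lim"
  proof
    have "emeasure (distr IT.PF.lim (count_space UNIV) (\<lambda>\<omega>. map \<omega> [0..<0])) UNIV = 1"
      using law[of 0] by (simp add: measure_pmf.emeasure_space_1[simplified])
    then show "emeasure IT.PF.lim (space IT.PF.lim) = 1"
      by (subst (asm) emeasure_distr[OF ml]) (simp_all add: vimage_def)
  qed
  then show ?thesis using law sets unfolding law_of_def by blast
qed

end


section \<open>Basic facts on runs\<close>

lemma set_step: "x \<in> set_pmf (bandit_step A adv sh) \<Longrightarrow>
   \<exists>s' k. (s', k) \<in> set_pmf (alg_sel A (fst sh)) \<and> snd x = snd sh @ [k]"
  by (force simp: bandit_step_def split: prod.splits)

lemma run_len: "x \<in> set_pmf (bandit_run A adv t) \<Longrightarrow> length (snd x) = t"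
proof (induction t arbitrary: x)
  case 0 then show ?case by simp
next
  case (Suc t) then show ?case by (auto dest!: set_step)
qed

lemma run_arms:
  assumes "valid_alg K A"
  shows "x \<in> set_pmf (bandit_run A adv t) \<Longrightarrow> \<forall>i<length (snd x). snd x ! i < K"
proof (induction t arbitrary: x)
  case 0 then show ?case by simp
next
  case (Suc t)
  then obtain sh where sh: "sh \<in> set_pmf (bandit_run A adv t)" "x \<in> set_pmf (bandit_step A adv sh)" by auto
  then obtain s' k where "(s', k) \<in> set_pmf (alg_sel A (fst sh))" "snd x = snd sh @ [k]" by (blast dest: set_step)
  moreover then have "k < K" using assms unfolding valid_alg_def by blast
  ultimately show ?case using Suc.IH[OF sh(1)] by (auto simp: nth_append)
qed

lemma run_cong:
  assumes "\<And>h. length h < t \<Longrightarrow> adv1 h = adv2 h"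
  shows "bandit_run A adv1 t = bandit_run A adv2 t"
  using assms
proof (induction t)
  case 0 then show ?case by simp
next
  case (Suc t)
  have "bandit_run A adv1 t = bandit_run A adv2 t" using Suc by auto
  moreover have "bandit_step A adv1 sh = bandit_step A adv2 sh" if "sh \<in> set_pmf (bandit_run A adv2 t)" for sh
  proof -
    have "length (snd sh) = t" using run_len[OF that] .
    then have "adv1 (snd sh) = adv2 (snd sh)" using Suc.prems by auto
    then show ?thesis by (simp add: bandit_step_def)
  qed
  ultimately show ?case by (simp cong: bind_pmf_cong)
qed

lemma run_consistent: "consistent_fam (\<lambda>t. map_pmf snd (bandit_run A adv t))"
proof
  show "\<And>t xs. xs \<in> set_pmf (map_pmf snd (bandit_run A adv t)) \<Longrightarrow> length xs = t"
    using run_len by auto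
  fix t
  have "map_pmf (take t) (map_pmf snd (bandit_run A adv (Suc t)))
      = bind_pmf (bandit_run A adv t) (\<lambda>sh. map_pmf (take t \<circ> snd) (bandit_step A adv sh))"
    by (simp add: map_pmf_comp map_bind_pmf comp_def)
  also have "\<dots> = bind_pmf (bandit_run A adv t) (\<lambda>sh. return_pmf (snd sh))"
  proof (rule bind_pmf_cong[OF refl])
    fix sh assume sh: "sh \<in> set_pmf (bandit_run A adv t)"
    have "map_pmf (take t \<circ> snd) (bandit_step A adv sh) = map_pmf (\<lambda>_. snd sh) (bandit_step A adv sh)"
      using run_len[OF sh] by (intro map_pmf_cong) (auto dest!: set_step)
    then show "map_pmf (take t \<circ> snd) (bandit_step A adv sh) = return_pmf (snd sh)" by simp
  qed
  also have "\<dots> = map_pmf snd (bandit_run A adv t)" by (simp add: map_pmf_def)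
  finally show "map_pmf (take t) (map_pmf snd (bandit_run A adv (Suc t))) = map_pmf snd (bandit_run A adv t)" .
qed

lemma exists_run_law: "\<exists>M. law_of M (\<lambda>t. map_pmf snd (bandit_run A adv t))"
  using consistent_fam.exists_law[OF run_consistent] .

section \<open>Exploration sequences\<close>

definition nae :: "(nat \<Rightarrow> bool \<times> nat) \<Rightarrow> nat \<Rightarrow> nat" where
  "nae e s = card {j. j < s \<and> \<not> fst (e j)}"

definition tauE :: "(nat \<Rightarrow> bool \<times> nat) \<Rightarrow> nat \<Rightarrow> nat" where
  "tauE e m = (LEAST s. \<not> fst (e s) \<and> nae e s = m)"

definition phiE :: "(nat \<Rightarrow> bool \<times> nat) \<Rightarrow> nat list \<Rightarrow> nat \<Rightarrow> nat" where
  "phiE e h s = (if fst (e s) then snd (e s) else h ! nae e s)"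

definition advE :: "(nat list \<Rightarrow> nat \<Rightarrow> real) \<Rightarrow> (nat \<Rightarrow> bool \<times> nat) \<Rightarrow> nat list \<Rightarrow> nat \<Rightarrow> real" where
  "advE adv e h k = adv (map (phiE e h) [0..<tauE e (length h)]) k"

definition extL :: "(bool \<times> nat) list \<Rightarrow> nat \<Rightarrow> bool \<times> nat" where
  "extL es s = (if s < length es then es ! s else (False, 0))"

definition naL :: "(bool \<times> nat) list \<Rightarrow> nat" where
  "naL es = length (filter (\<lambda>p. \<not> fst p) es)"

definition phiL :: "(bool \<times> nat) list \<Rightarrow> nat list \<Rightarrow> nat list" where
  "phiL es h = map (phiE (extL es) h) [0..<length es]"

definition Phi :: "(nat \<Rightarrow> bool \<times> nat) \<Rightarrow> (nat \<Rightarrow> nat) \<Rightarrow> nat \<Rightarrow> nat" where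
  "Phi e \<omega> s = (if fst (e s) then snd (e s) else \<omega> (nae e s))"

lemma nae_0[simp]: "nae e 0 = 0" by (simp add: nae_def)

lemma nae_Suc: "nae e (Suc s) = nae e s + (if fst (e s) then 0 else 1)"
proof -
  have "{j. j < Suc s \<and> \<not> fst (e j)} = {j. j < s \<and> \<not> fst (e j)} \<union> (if fst (e s) then {} else {s})"
    by (auto simp: less_Suc_eq)
  then show ?thesis by (simp add: nae_def)
qed

lemma nae_mono: "s \<le> s' \<Longrightarrow> nae e s \<le> nae e s'"
  unfolding nae_def by (intro card_mono) auto

lemma nae_le: "nae e s \<le> s"
  unfolding nae_def using card_mono[of "{..<s}" "{j. j < s \<and> \<not> fst (e j)}"] by auto

lemma nae_strict: "s < s' \<Longrightarrow> \<not> fst (e s) \<Longrightarrow> nae e s < nae e s'"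
proof -
  assume "s < s'" "\<not> fst (e s)"
  then have "nae e (Suc s) = Suc (nae e s)" by (simp add: nae_Suc)
  moreover have "nae e (Suc s) \<le> nae e s'" using \<open>s < s'\<close> by (intro nae_mono) simp
  ultimately show ?thesis by simp
qed

lemma tauE_eq:
  assumes "\<not> fst (e s)" "nae e s = m"
  shows "tauE e m = s"
  unfolding tauE_def
proof (rule Least_equality)
  show "\<not> fst (e s) \<and> nae e s = m" using assms by simp
  fix y assume y: "\<not> fst (e y) \<and> nae e y = m"
  show "s \<le> y"
  proof (rule ccontr)
    assume "\<not> s \<le> y"
    then have "nae e y < nae e s" using y by (intro nae_strict) auto
    then show False using y assms by simp
  qed
qed

lemma nae_exists: "m < nae e t \<Longrightarrow> \<exists>s<t. \<not> fst (e s) \<and> nae e s = m"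
proof (induction t)
  case 0 then show ?case by simp
next
  case (Suc t)
  show ?case
  proof (cases "m < nae e t")
    case True then show ?thesis using Suc.IH by (meson less_SucI)
  next
    case False
    then have "\<not> fst (e t) \<and> nae e t = m" using Suc.prems by (auto simp: nae_Suc split: if_splits)
    then show ?thesis by blast
  qed
qed

lemma nae_cong: "(\<And>j. j < s \<Longrightarrow> e j = e' j) \<Longrightarrow> nae e s = nae e' s"
  unfolding nae_def by (rule arg_cong[where f=card]) auto

lemma nae_extL: "s \<le> length es \<Longrightarrow> nae (extL es) s = naL (take s es)"
proof (induction s)
  case 0 then show ?case by (simp add: naL_def)
next
  case (Suc s)
  then have "s < length es" by simp
  then show ?case using Suc by (simp add: nae_Suc naL_def take_Suc_conv_app_nth extL_def)
qed

lemma nae_extL_full: "nae (extL es) (length es) = naL es"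
  using nae_extL[of "length es" es] by simp

lemma extL_app: "j < length es \<Longrightarrow> extL (es @ p) j = extL es j"
  by (simp add: extL_def nth_append)

lemma naL_snoc: "naL (es @ [(b, x)]) = naL es + (if b then 0 else 1)"
  by (simp add: naL_def)

lemma phiE_cong: "\<lbrakk>e s = e' s; nae e s = nae e' s\<rbrakk> \<Longrightarrow> phiE e h s = phiE e' h s"
  by (simp add: phiE_def)

lemma advL_snoc:
  assumes "length h < naL es"
  shows "advE adv (extL (es @ p)) h = advE adv (extL es) h"
proof -
  have "length h < nae (extL es) (length es)" using assms nae_extL_full by simp
  then obtain s where s: "s < length es" "\<not> fst (extL es s)" "nae (extL es) s = length h"
    using nae_exists by blast
  have agree: "extL (es @ p) j = extL es j" if "j < length es" for j using that extL_app by blast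
  have nae_agree: "nae (extL (es @ p)) j = nae (extL es) j" if "j \<le> length es" for j
    using that agree by (intro nae_cong) auto
  have t1: "tauE (extL es) (length h) = s" using s by (intro tauE_eq) auto
  have t2: "tauE (extL (es @ p)) (length h) = s" using s agree nae_agree by (intro tauE_eq) auto
  have eqm: "map (phiE (extL (es @ p)) h) [0..<s] = map (phiE (extL es) h) [0..<s]"
    using s agree nae_agree by (intro map_cong refl phiE_cong) auto
  show ?thesis by (rule ext) (simp only: advE_def t1 t2 eqm)
qed

lemma advL_new:
  assumes "length h = naL es"
  shows "advE adv (extL (es @ [(False, x)])) h = adv (phiL es h)"
proof -
  have agree: "extL (es @ [(False, x)]) j = extL es j" if "j < length es" for j using that extL_app by blast
  have nae_agree: "nae (extL (es @ [(False, x)])) j = nae (extL es) j" if "j \<le> length es" for j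
    using that agree by (intro nae_cong) auto
  have "tauE (extL (es @ [(False, x)])) (length h) = length es"
    using assms nae_agree[of "length es"] nae_extL_full[of es] by (intro tauE_eq) (auto simp: extL_def)
  moreover have "map (phiE (extL (es @ [(False, x)])) h) [0..<length es] = phiL es h"
    unfolding phiL_def using agree nae_agree by (intro map_cong refl phiE_cong) auto
  ultimately show ?thesis by (simp add: advE_def[abs_def])
qed

lemma phiL_snoc:
  "phiL (es @ [(b, x)]) h = phiL es h @ [if b then x else h ! naL es]"
proof -
  have agree: "extL (es @ [(b, x)]) j = extL es j" if "j < length es" for j using that extL_app by blast
  have nae_agree: "nae (extL (es @ [(b, x)])) j = nae (extL es) j" if "j \<le> length es" for j
    using that agree by (intro nae_cong) auto
  have "map (phiE (extL (es @ [(b, x)])) h) [0..<length es] = phiL es h"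
    unfolding phiL_def using agree nae_agree by (intro map_cong refl phiE_cong) auto
  moreover have "phiE (extL (es @ [(b, x)])) h (length es) = (if b then x else h ! naL es)"
    using nae_agree[of "length es"] nae_extL_full[of es] by (cases b) (simp_all add: phiE_def extL_def)
  ultimately show ?thesis by (simp add: phiL_def)
qed

lemma phiL_app:
  assumes "length h = naL es"
  shows "phiL es (h @ ys) = phiL es h"
  unfolding phiL_def
proof (intro map_cong refl)
  fix s assume "s \<in> set [0..<length es]"
  then have s: "s < length es" by simp
  show "phiE (extL es) (h @ ys) s = phiE (extL es) h s"
  proof (cases "fst (extL es s)")
    case False
    then have "nae (extL es) s < nae (extL es) (length es)" using s by (intro nae_strict) auto
    then have "nae (extL es) s < length h" using assms nae_extL_full by simp
    then show ?thesis by (simp add: phiE_def nth_append)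
  qed (simp add: phiE_def)
qed


definition mu :: "real \<Rightarrow> nat \<Rightarrow> (bool \<times> nat) pmf" where
  "mu \<gamma> K = pair_pmf (bernoulli_pmf \<gamma>) (pmf_of_set {..<K})"

primrec iidL :: "'a pmf \<Rightarrow> nat \<Rightarrow> 'a list pmf" where
  "iidL p 0 = return_pmf []"
| "iidL p (Suc t) = bind_pmf (iidL p t) (\<lambda>es. map_pmf (\<lambda>x. es @ [x]) p)"

lemma iidL_len: "es \<in> set_pmf (iidL p t) \<Longrightarrow> length es = t"
  by (induction t arbitrary: es) auto

lemma iidL_consistent: "consistent_fam (iidL (p :: 'a::countable pmf))"
proof
  show "\<And>t xs. xs \<in> set_pmf (iidL p t) \<Longrightarrow> length xs = t" by (rule iidL_len)
  fix t
  have "map_pmf (take t) (iidL p (Suc t)) = bind_pmf (iidL p t) (\<lambda>es. map_pmf (\<lambda>x. take t (es @ [x])) p)"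
    by (simp add: map_bind_pmf map_pmf_comp)
  also have "\<dots> = bind_pmf (iidL p t) (\<lambda>es. return_pmf es)"
    by (intro bind_pmf_cong refl) (simp add: iidL_len)
  finally show "map_pmf (take t) (iidL p (Suc t)) = iidL p t" by (simp add: bind_return_pmf')
qed

lemma step_expand:
  "bandit_step (explore_alg \<gamma> K B) adv ((s, False), H) =
   bind_pmf (bernoulli_pmf \<gamma>) (\<lambda>b. if b then map_pmf (\<lambda>k. ((s, False), H @ [k])) (pmf_of_set {..<K})
      else bind_pmf (alg_sel B s) (\<lambda>(s', k). map_pmf (\<lambda>s''. ((s'', False), H @ [k])) (alg_upd B s' k (adv H k))))"
  unfolding bandit_step_def explore_alg_def
  by (auto simp: bind_assoc_pmf bind_map_pmf bind_return_pmf map_pmf_def intro!: bind_pmf_cong split: prod.splits)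

lemma coup_step:
  fixes B :: "'s bandit_alg" and adv :: "nat list \<Rightarrow> nat \<Rightarrow> real" and es :: "(bool \<times> nat) list"
  defines "R \<equiv> bandit_run B (advE adv (extL es)) (naL es)"
  shows "bind_pmf R (\<lambda>(s, h). bandit_step (explore_alg \<gamma> K B) adv ((s, False), phiL es h))
       = bind_pmf (mu \<gamma> K) (\<lambda>x. map_pmf (\<lambda>(s, h). ((s, False), phiL (es @ [x]) h))
            (bandit_run B (advE adv (extL (es @ [x]))) (naL (es @ [x]))))"
    (is "?L = ?R")
proof -
  let ?n = "naL es"
  let ?U = "pmf_of_set {..<K}"
  define Q where "Q = (\<lambda>b s h. if b then map_pmf (\<lambda>k. ((s, False), phiL es h @ [k])) ?U
      else bind_pmf (alg_sel B s) (\<lambda>(s', k). map_pmf (\<lambda>s''. ((s'', False), phiL es h @ [k])) (alg_upd B s' k (adv (phiL es h) k))))"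
  have "?L = bind_pmf R (\<lambda>sh. bind_pmf (bernoulli_pmf \<gamma>) (\<lambda>b. Q b (fst sh) (snd sh)))"
  proof (intro bind_pmf_cong refl)
    fix sh :: "'s \<times> nat list"
    obtain s h where "sh = (s, h)" by fastforce
    then show "(case sh of (s, h) \<Rightarrow> bandit_step (explore_alg \<gamma> K B) adv ((s, False), phiL es h)) =
          bind_pmf (bernoulli_pmf \<gamma>) (\<lambda>b. Q b (fst sh) (snd sh))"
      unfolding Q_def by (simp only: step_expand prod.case fst_conv snd_conv)
  qed
  also have "\<dots> = bind_pmf (bernoulli_pmf \<gamma>) (\<lambda>b. bind_pmf R (\<lambda>sh. Q b (fst sh) (snd sh)))"
    by (rule bind_commute_pmf)
  finally have L: "?L = \<dots>" .
  have R: "?R = bind_pmf (bernoulli_pmf \<gamma>) (\<lambda>b. bind_pmf ?U (\<lambda>x. map_pmf (\<lambda>(s, h). ((s, False), phiL (es @ [(b,x)]) h))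
            (bandit_run B (advE adv (extL (es @ [(b,x)]))) (naL (es @ [(b,x)])))))"
    unfolding mu_def pair_pmf_def by (simp add: bind_assoc_pmf bind_return_pmf)
  have runeq: "bandit_run B (advE adv (extL (es @ [p]))) ?n = R" for p
    unfolding R_def by (rule run_cong) (rule advL_snoc)
  show ?thesis
    unfolding L R
  proof (intro bind_pmf_cong refl)
    fix b assume "b \<in> set_pmf (bernoulli_pmf \<gamma>)"
    show "bind_pmf R (\<lambda>sh. Q b (fst sh) (snd sh)) = bind_pmf ?U (\<lambda>x. map_pmf (\<lambda>(s, h). ((s, False), phiL (es @ [(b,x)]) h))
            (bandit_run B (advE adv (extL (es @ [(b,x)]))) (naL (es @ [(b,x)]))))"
    proof (cases b)
      case True
      have "bind_pmf ?U (\<lambda>x. map_pmf (\<lambda>(s, h). ((s, False), phiL (es @ [(b,x)]) h))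
            (bandit_run B (advE adv (extL (es @ [(b,x)]))) (naL (es @ [(b,x)]))))
          = bind_pmf ?U (\<lambda>x. bind_pmf R (\<lambda>sh. return_pmf ((fst sh, False), phiL es (snd sh) @ [x])))"
        using True by (intro bind_pmf_cong refl) (simp add: naL_snoc runeq phiL_snoc map_pmf_def split_beta)
      also have "\<dots> = bind_pmf R (\<lambda>sh. bind_pmf ?U (\<lambda>x. return_pmf ((fst sh, False), phiL es (snd sh) @ [x])))"
        by (rule bind_commute_pmf)
      also have "\<dots> = bind_pmf R (\<lambda>sh. Q b (fst sh) (snd sh))"
        using True by (simp add: Q_def map_pmf_def)
      finally show ?thesis by simp
    next
      case False
      have "map_pmf (\<lambda>(s, h). ((s, False), phiL (es @ [(b,x)]) h))
            (bandit_run B (advE adv (extL (es @ [(b,x)]))) (naL (es @ [(b,x)])))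
          = bind_pmf R (\<lambda>sh. Q b (fst sh) (snd sh))" for x
      proof -
        have "bandit_run B (advE adv (extL (es @ [(b,x)]))) (naL (es @ [(b,x)]))
            = bind_pmf R (bandit_step B (advE adv (extL (es @ [(False,x)]))))"
          using False runeq by (simp add: naL_snoc)
        then have "map_pmf (\<lambda>(s, h). ((s, False), phiL (es @ [(b,x)]) h))
            (bandit_run B (advE adv (extL (es @ [(b,x)]))) (naL (es @ [(b,x)])))
          = bind_pmf R (\<lambda>sh. map_pmf (\<lambda>(s, h). ((s, False), phiL (es @ [(False,x)]) h))
               (bandit_step B (advE adv (extL (es @ [(False,x)]))) sh))"
          using False by (simp add: map_bind_pmf)
        also have "\<dots> = bind_pmf R (\<lambda>sh. Q b (fst sh) (snd sh))"
        proof (intro bind_pmf_cong refl)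
          fix sh assume sh: "sh \<in> set_pmf R"
          have len: "length (snd sh) = ?n" using run_len sh unfolding R_def by blast
          have ph: "phiL (es @ [(False, x)]) (snd sh @ [k]) = phiL es (snd sh) @ [k]" for k
            using len by (simp add: phiL_snoc phiL_app nth_append)
          show "map_pmf (\<lambda>(s, h). ((s, False), phiL (es @ [(False,x)]) h))
               (bandit_step B (advE adv (extL (es @ [(False,x)]))) sh) = Q b (fst sh) (snd sh)"
            using False unfolding Q_def bandit_step_def
            by (auto simp: map_bind_pmf advL_new[OF len] ph map_pmf_comp split_beta map_pmf_def bind_assoc_pmf bind_return_pmf intro!: bind_pmf_cong)
        qed
        finally show ?thesis .
      qed
      then show ?thesis by simp
    qed
  qed
qed

lemma coup:
  "bandit_run (explore_alg \<gamma> K B) adv t = bind_pmf (iidL (mu \<gamma> K) t)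
     (\<lambda>es. map_pmf (\<lambda>(s, h). ((s, False), phiL es h)) (bandit_run B (advE adv (extL es)) (naL es)))"
proof (induction t)
  case 0
  show ?case by (simp add: explore_alg_def phiL_def naL_def bind_return_pmf)
next
  case (Suc t)
  have "bandit_run (explore_alg \<gamma> K B) adv (Suc t)
      = bind_pmf (iidL (mu \<gamma> K) t) (\<lambda>es. bind_pmf (bandit_run B (advE adv (extL es)) (naL es))
          (\<lambda>(s, h). bandit_step (explore_alg \<gamma> K B) adv ((s, False), phiL es h)))"
    unfolding bandit_run.simps Suc bind_assoc_pmf bind_map_pmf by (intro bind_pmf_cong refl) (simp add: split_beta)
  also have "\<dots> = bind_pmf (iidL (mu \<gamma> K) t) (\<lambda>es. bind_pmf (mu \<gamma> K) (\<lambda>x. map_pmf (\<lambda>(s, h). ((s, False), phiL (es @ [x]) h))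
            (bandit_run B (advE adv (extL (es @ [x]))) (naL (es @ [x])))))"
    by (intro bind_pmf_cong refl coup_step)
  also have "\<dots> = bind_pmf (iidL (mu \<gamma> K) (Suc t))
     (\<lambda>es. map_pmf (\<lambda>(s, h). ((s, False), phiL es h)) (bandit_run B (advE adv (extL es)) (naL es)))"
    by (simp add: bind_assoc_pmf bind_map_pmf)
  finally show ?case .
qed


abbreviation PSn :: "(nat \<Rightarrow> nat) measure" where
  "PSn \<equiv> PiM UNIV (\<lambda>_::nat. count_space (UNIV::nat set))"

definition nu :: "real \<Rightarrow> nat \<Rightarrow> (nat \<Rightarrow> bool \<times> nat) measure" where
  "nu \<gamma> K = (SOME M. law_of M (iidL (mu \<gamma> K)))"

lemma law_nu: "law_of (nu \<gamma> K) (iidL (mu \<gamma> K))"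
  unfolding nu_def by (rule someI_ex, rule consistent_fam.exists_law[OF iidL_consistent])

definition Kerm :: "'s bandit_alg \<Rightarrow> (nat list \<Rightarrow> nat \<Rightarrow> real) \<Rightarrow> (nat \<Rightarrow> bool \<times> nat) \<Rightarrow> (nat \<Rightarrow> nat) measure" where
  "Kerm B adv e = (SOME M. law_of M (\<lambda>t. map_pmf snd (bandit_run B (advE adv e) t)))"

lemma law_Kerm: "law_of (Kerm B adv e) (\<lambda>t. map_pmf snd (bandit_run B (advE adv e) t))"
  unfolding Kerm_def by (rule someI_ex, rule exists_run_law)

definition Lk :: "'s bandit_alg \<Rightarrow> (nat list \<Rightarrow> nat \<Rightarrow> real) \<Rightarrow> (nat \<Rightarrow> bool \<times> nat) \<Rightarrow> (nat \<Rightarrow> nat) measure" where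
  "Lk B adv e = distr (Kerm B adv e) PSn (Phi e)"

definition Gt :: "(nat list \<Rightarrow> nat \<Rightarrow> real) \<Rightarrow> 's bandit_alg \<Rightarrow> (bool \<times> nat) list \<Rightarrow> nat list pmf" where
  "Gt adv B es = map_pmf (phiL es) (map_pmf snd (bandit_run B (advE adv (extL es)) (naL es)))"

lemma meas_Phi: "Phi e \<in> measurable PSn PSn"
proof -
  have "(\<lambda>\<omega> i. Phi e \<omega> i) \<in> measurable PSn PSn"
  proof (rule measurable_PiM_single')
    fix i :: nat
    show "(\<lambda>\<omega>. Phi e \<omega> i) \<in> measurable PSn (count_space UNIV)"
    proof (cases "fst (e i)")
      case True then show ?thesis by (simp add: Phi_def)
    next
      case False
      then have "(\<lambda>\<omega>. Phi e \<omega> i) = (\<lambda>\<omega>. \<omega> (nae e i))" by (simp add: Phi_def fun_eq_iff)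
      then show ?thesis by (simp add: measurable_component_singleton)
    qed
  qed simp
  then show ?thesis by simp
qed

lemma advE_agree:
  assumes agree: "\<And>j. j < t \<Longrightarrow> e j = e' j" and "length h < nae e t"
  shows "advE adv e h = advE adv e' h"
proof -
  obtain s where s: "s < t" "\<not> fst (e s)" "nae e s = length h"
    using nae_exists assms(2) by blast
  have nae_agree: "nae e j = nae e' j" if "j \<le> t" for j
    using that agree by (intro nae_cong) auto
  have t1: "tauE e (length h) = s" using s by (intro tauE_eq) auto
  have t2: "tauE e' (length h) = s" using s agree nae_agree by (intro tauE_eq) auto
  have eqm: "map (phiE e h) [0..<s] = map (phiE e' h) [0..<s]"
    using s agree nae_agree by (intro map_cong refl phiE_cong) auto
  show ?thesis by (rule ext) (simp only: advE_def t1 t2 eqm)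
qed

lemma extL_map: "j < t \<Longrightarrow> extL (map e [0..<t]) j = e j"
  by (simp add: extL_def)

lemma naL_map: "naL (map e [0..<t]) = nae e t"
proof -
  have "naL (map e [0..<t]) = nae (extL (map e [0..<t])) t" using nae_extL_full[of "map e [0..<t]"] by simp
  also have "\<dots> = nae e t" by (rule nae_cong) (simp add: extL_map)
  finally show ?thesis .
qed

lemma map_Phi: "map (Phi e \<omega>) [0..<t] = phiL (map e [0..<t]) (map \<omega> [0..<nae e t])"
  unfolding phiL_def length_map length_upt diff_zero
proof (intro map_cong refl)
  fix s assume "s \<in> set [0..<t]"
  then have s: "s < t" by simp
  have ne: "nae (extL (map e [0..<t])) s = nae e s" by (rule nae_cong) (use s in \<open>simp add: extL_map\<close>)
  show "Phi e \<omega> s = phiE (extL (map e [0..<t])) (map \<omega> [0..<nae e t]) s"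
  proof (cases "fst (e s)")
    case False
    then have "nae e s < nae e t" using s by (intro nae_strict)
    then show ?thesis using False s by (simp add: Phi_def phiE_def extL_map ne)
  qed (simp add: Phi_def phiE_def extL_map s)
qed

lemma run_advE_extL:
  "bandit_run B (advE adv e) (nae e t) = bandit_run B (advE adv (extL (map e [0..<t]))) (naL (map e [0..<t]))"
  unfolding naL_map by (rule run_cong, rule advE_agree[where t=t]) (auto simp: extL_map)

lemma fd_Lk: "distr (Lk B adv e) (count_space UNIV) (\<lambda>\<omega>. map \<omega> [0..<t]) = measure_pmf (Gt adv B (map e [0..<t]))"
proof -
  let ?K = "Kerm B adv e"
  note law = law_Kerm[of B adv e]
  have sK: "sets ?K = sets PSn" by (rule law_ofD(2)[OF law])
  have mPhi: "Phi e \<in> measurable ?K PSn" using meas_Phi by (simp cong: measurable_cong_sets add: sK)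
  have mn: "(\<lambda>\<omega>. map \<omega> [0..<nae e t]) \<in> measurable ?K (count_space UNIV)" by (rule law_meas_prefix[OF law])
  have "distr (Lk B adv e) (count_space UNIV) (\<lambda>\<omega>. map \<omega> [0..<t])
      = distr ?K (count_space UNIV) ((\<lambda>\<omega>. map \<omega> [0..<t]) \<circ> Phi e)"
    unfolding Lk_def by (rule distr_distr[OF meas_prefix[OF subset_UNIV] mPhi])
  also have "(\<lambda>\<omega>. map \<omega> [0..<t]) \<circ> Phi e = phiL (map e [0..<t]) \<circ> (\<lambda>\<omega>. map \<omega> [0..<nae e t])"
    by (auto simp: fun_eq_iff map_Phi)
  also have "distr ?K (count_space UNIV) (phiL (map e [0..<t]) \<circ> (\<lambda>\<omega>. map \<omega> [0..<nae e t]))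
      = distr (distr ?K (count_space UNIV) (\<lambda>\<omega>. map \<omega> [0..<nae e t])) (count_space UNIV) (phiL (map e [0..<t]))"
    by (rule distr_distr[symmetric, OF _ mn]) simp
  also have "\<dots> = measure_pmf (map_pmf (phiL (map e [0..<t])) (map_pmf snd (bandit_run B (advE adv e) (nae e t))))"
    by (simp add: law_ofD(4)[OF law] map_pmf_rep_eq)
  also have "\<dots> = measure_pmf (Gt adv B (map e [0..<t]))"
    unfolding Gt_def run_advE_extL ..
  finally show ?thesis .
qed


lemma prod_algebra_cyl:
  assumes "X \<in> prod_algebra UNIV (\<lambda>_::nat. count_space (UNIV::'a set))"
  shows "\<exists>t S. X = {\<omega>. map \<omega> [0..<t] \<in> S}"
proof -
  obtain J E where X: "X = prod_emb UNIV (\<lambda>_. count_space UNIV) J (Pi\<^sub>E J E)" and J: "finite J"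
    using assms by (force elim!: prod_algebraE)
  then obtain t where t: "J \<subseteq> {..<t}" using finite_nat_bounded by blast
  have "X = {\<omega>. map \<omega> [0..<t] \<in> {xs. \<forall>j\<in>J. xs ! j \<in> E j}}"
    using t unfolding X by (auto simp: prod_emb_def PiE_iff subset_iff)
  then show ?thesis by blast
qed

lemma prob_Lk: "prob_space (Lk B adv e)"
  unfolding Lk_def
  by (rule prob_space.prob_space_distr[OF law_ofD(1)[OF law_Kerm]])
     (simp add: meas_Phi law_ofD(2)[OF law_Kerm] cong: measurable_cong_sets)

lemma sets_Lk: "sets (Lk B adv e) = sets PSn"
  by (simp add: Lk_def)

lemma meas_Lk: "Lk B adv \<in> measurable (nu \<gamma> K) (prob_algebra PSn)"
proof (rule measurable_prob_algebra_generated[OF sets_PiM Int_stable_prod_algebra prod_algebra_sets_into_space])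
  fix e show "prob_space (Lk B adv e)" by (rule prob_Lk)
  show "sets (Lk B adv e) = sets PSn" by (rule sets_Lk)
next
  fix A assume "A \<in> prod_algebra UNIV (\<lambda>_::nat. count_space (UNIV::nat set))"
  then obtain t S where A: "A = {\<omega>. map \<omega> [0..<t] \<in> S}" using prod_algebra_cyl by blast
  have "emeasure (Lk B adv e) A = emeasure (measure_pmf (Gt adv B (map e [0..<t]))) S" for e
  proof -
    have m: "(\<lambda>\<omega>. map \<omega> [0..<t]) \<in> measurable (Lk B adv e) (count_space (UNIV::nat list set))"
      by (subst measurable_cong_sets[OF sets_Lk refl]) (rule meas_prefix[OF subset_UNIV])
    have "emeasure (measure_pmf (Gt adv B (map e [0..<t]))) S
        = emeasure (distr (Lk B adv e) (count_space UNIV) (\<lambda>\<omega>. map \<omega> [0..<t])) S"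
      by (simp add: fd_Lk)
    also have "\<dots> = emeasure (Lk B adv e) ((\<lambda>\<omega>. map \<omega> [0..<t]) -` S \<inter> space (Lk B adv e))"
      by (rule emeasure_distr[OF m]) simp
    also have "\<dots> = emeasure (Lk B adv e) A"
      unfolding A by (simp add: Lk_def space_PiM vimage_def)
    finally show ?thesis by simp
  qed
  moreover have "(\<lambda>e. emeasure (measure_pmf (Gt adv B (map e [0..<t]))) S) \<in> borel_measurable (nu \<gamma> K)"
    by (subst measurable_cong_sets[OF law_ofD(2)[OF law_nu] refl]) (rule meas_via_prefix, simp_all)
  ultimately show "(\<lambda>e. emeasure (Lk B adv e) A) \<in> borel_measurable (nu \<gamma> K)" by simp
qed

lemma map_snd_run_star:
  "map_pmf snd (bandit_run (explore_alg \<gamma> K B) adv t) = bind_pmf (iidL (mu \<gamma> K) t) (Gt adv B)"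
  unfolding coup Gt_def map_bind_pmf
  by (intro bind_pmf_cong refl) (simp add: map_pmf_comp split_beta)

lemma law_Q: "law_of (nu \<gamma> K \<bind> Lk B adv) (\<lambda>t. map_pmf snd (bandit_run (explore_alg \<gamma> K B) adv t))"
proof -
  note lnu = law_nu[of \<gamma> K]
  have mL: "Lk B adv \<in> measurable (nu \<gamma> K) (subprob_algebra PSn)"
    by (rule measurable_prob_algebraD[OF meas_Lk])
  have sp: "space (nu \<gamma> K) \<noteq> {}" using law_ofD(3)[OF lnu] by simp
  have prob: "prob_space (nu \<gamma> K \<bind> Lk B adv)"
    by (rule prob_space.prob_space_bind[OF law_ofD(1)[OF lnu] AE_I2[OF prob_Lk] mL])
  have sets: "sets (nu \<gamma> K \<bind> Lk B adv) = sets PSn"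
    by (rule sets_bind[OF sets_Lk sp])
  have fd: "distr (nu \<gamma> K \<bind> Lk B adv) (count_space UNIV) (\<lambda>\<omega>. map \<omega> [0..<t])
       = measure_pmf (map_pmf snd (bandit_run (explore_alg \<gamma> K B) adv t))" for t
  proof -
    have g: "(\<lambda>es. measure_pmf (Gt adv B es)) \<in> measurable (count_space UNIV) (subprob_algebra (count_space UNIV))"
      by (simp add: measure_pmf_in_subprob_algebra)
    have mnu: "(\<lambda>e. map e [0..<t]) \<in> measurable (nu \<gamma> K) (count_space UNIV)"
      by (rule law_meas_prefix[OF lnu])
    have "distr (nu \<gamma> K \<bind> Lk B adv) (count_space UNIV) (\<lambda>\<omega>. map \<omega> [0..<t])
        = nu \<gamma> K \<bind> (\<lambda>e. distr (Lk B adv e) (count_space UNIV) (\<lambda>\<omega>. map \<omega> [0..<t]))"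
      by (rule distr_bind[OF mL sp meas_prefix[OF subset_UNIV]])
    also have "\<dots> = nu \<gamma> K \<bind> (\<lambda>e. measure_pmf (Gt adv B (map e [0..<t])))"
      by (simp add: fd_Lk)
    also have "\<dots> = distr (nu \<gamma> K) (count_space UNIV) (\<lambda>e. map e [0..<t]) \<bind> (\<lambda>es. measure_pmf (Gt adv B es))"
      by (rule bind_distr[symmetric, OF mnu g sp])
    also have "\<dots> = measure_pmf (bind_pmf (iidL (mu \<gamma> K) t) (Gt adv B))"
      by (simp add: law_ofD(4)[OF lnu] measure_pmf_bind)
    finally show ?thesis by (simp add: map_snd_run_star)
  qed
  show ?thesis unfolding law_of_def using prob sets fd by blast
qed


lemma law_AE:
  assumes "law_of M (P :: nat \<Rightarrow> 'a::countable list pmf)" "\<And>xs. xs \<in> set_pmf (P t) \<Longrightarrow> R xs"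
  shows "AE \<omega> in M. R (map \<omega> [0..<t])"
proof -
  have "AE xs in measure_pmf (P t). R xs" using assms(2) by (simp add: AE_measure_pmf_iff)
  then have "AE xs in distr M (count_space UNIV) (\<lambda>\<omega>. map \<omega> [0..<t]). R xs"
    by (subst law_ofD(4)[OF assms(1)])
  then show ?thesis
    by (subst (asm) AE_distr_iff[OF law_meas_prefix[OF assms(1)]]) simp_all
qed

definition nex :: "(nat \<Rightarrow> bool \<times> nat) \<Rightarrow> nat \<Rightarrow> nat" where
  "nex e t = card {j. j < t \<and> fst (e j)}"

lemma nex_Suc: "nex e (Suc t) = nex e t + (if fst (e t) then 1 else 0)"
proof -
  have "{j. j < Suc t \<and> fst (e j)} = {j. j < t \<and> fst (e j)} \<union> (if fst (e t) then {t} else {})"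
    by (auto simp: less_Suc_eq)
  then show ?thesis by (simp add: nex_def)
qed

lemma nex_0[simp]: "nex e 0 = 0" by (simp add: nex_def)

lemma nex_nae: "nex e t + nae e t = t"
  by (induction t) (auto simp: nex_Suc nae_Suc)

lemma cnt_map: "length (filter fst (map e [0..<t])) = nex e t"
  by (induction t) (simp_all add: nex_Suc)

lemma cnt_map': "length (filter (fst \<circ> e) [0..<t]) = nex e t"
  using cnt_map[of e t] by (simp add: filter_map)

lemma iidL_count:
  assumes "\<gamma> \<in> {0..1}"
  shows "map_pmf (\<lambda>es. length (filter fst es)) (iidL (mu \<gamma> K) t) = binomial_pmf t \<gamma>"
proof (induction t)
  case 0 then show ?case by (simp add: binomial_pmf_0[OF assms])
next
  case (Suc t)
  have mf: "map_pmf fst (mu \<gamma> K) = bernoulli_pmf \<gamma>" by (simp add: mu_def map_fst_pair_pmf)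
  have "map_pmf (\<lambda>es. length (filter fst es)) (iidL (mu \<gamma> K) (Suc t))
      = bind_pmf (iidL (mu \<gamma> K) t) (\<lambda>es. map_pmf (\<lambda>x. length (filter fst es) + (if fst x then 1 else 0)) (mu \<gamma> K))"
    by (auto simp: map_bind_pmf map_pmf_comp intro!: bind_pmf_cong map_pmf_cong)
  also have "\<dots> = bind_pmf (map_pmf (\<lambda>es. length (filter fst es)) (iidL (mu \<gamma> K) t))
        (\<lambda>k. map_pmf (\<lambda>b. k + (if b then 1 else 0)) (bernoulli_pmf \<gamma>))"
    by (simp add: bind_map_pmf mf[symmetric] map_pmf_comp)
  also have "\<dots> = bind_pmf (binomial_pmf t \<gamma>) (\<lambda>k. bind_pmf (bernoulli_pmf \<gamma>) (\<lambda>b. return_pmf ((if b then 1 else 0) + k)))"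
    unfolding Suc by (simp add: map_pmf_def add.commute)
  also have "\<dots> = binomial_pmf (Suc t) \<gamma>"
    by (subst binomial_pmf_Suc[OF assms]) (rule bind_commute_pmf)
  finally show ?case .
qed

lemma slln_upper:
  assumes "\<gamma> \<in> {0..1}" "\<delta> > 0"
  shows "AE e in nu \<gamma> K. eventually (\<lambda>t. real (nex e t) < (\<gamma> + \<delta>) * real t) sequentially"
proof -
  note lnu = law_nu[of \<gamma> K]
  define S where "S t = {es :: (bool \<times> nat) list. real (length (filter fst es)) \<ge> (\<gamma> + \<delta>) * real t}" for t
  define A where "A t = {e. map e [0..<t] \<in> S t}" for t
  have A_sets: "A t \<in> sets (nu \<gamma> K)" for t
  proof -
    have "(\<lambda>e. map e [0..<t]) -` S t \<inter> space (nu \<gamma> K) \<in> sets (nu \<gamma> K)"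
      by (rule measurable_sets[OF law_meas_prefix[OF lnu]]) simp
    then show ?thesis using law_ofD(3)[OF lnu] by (simp add: A_def vimage_def)
  qed
  have mA: "measure (nu \<gamma> K) (A t) \<le> exp (-2 * \<delta>\<^sup>2) ^ t" for t
  proof (cases "t = 0")
    case True
    then show ?thesis using prob_space.prob_le_1[OF law_ofD(1)[OF lnu]] by simp
  next
    case False
    have "emeasure (nu \<gamma> K) (A t) = emeasure (measure_pmf (iidL (mu \<gamma> K) t)) (S t)"
      unfolding A_def by (rule law_emeasure[OF lnu])
    then have "measure (nu \<gamma> K) (A t) = measure_pmf.prob (iidL (mu \<gamma> K) t) (S t)"
      by (simp add: measure_def)
    also have "\<dots> = measure_pmf.prob (map_pmf (\<lambda>es. length (filter fst es)) (iidL (mu \<gamma> K) t)) {x. real x \<ge> (\<gamma> + \<delta>) * real t}"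
      by (simp add: S_def vimage_def)
    also have "\<dots> = measure_pmf.prob (binomial_pmf t \<gamma>) {x. real x / real t \<ge> \<gamma> + \<delta>}"
      using False by (simp add: iidL_count[OF assms(1)] pos_le_divide_eq)
    also have "\<dots> \<le> exp (-2 * real t * \<delta>\<^sup>2)"
      using binomial_distribution.prob_ge'[of \<gamma> t \<delta>] assms False by (simp add: binomial_distribution_def)
    also have "\<dots> = exp (-2 * \<delta>\<^sup>2) ^ t"
      by (simp add: exp_of_nat_mult[symmetric] mult_ac)
    finally show ?thesis .
  qed
  have summ: "summable (\<lambda>t. measure (nu \<gamma> K) (A t))"
  proof (rule summable_comparison_test[of _ "\<lambda>t. exp (-2 * \<delta>\<^sup>2) ^ t"])
    show "\<exists>N. \<forall>n\<ge>N. norm (measure (nu \<gamma> K) (A n)) \<le> exp (-2 * \<delta>\<^sup>2) ^ n" using mA by simp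
    show "summable (\<lambda>t. exp (-2 * \<delta>\<^sup>2) ^ t)"
      using assms(2) by (intro summable_geometric) simp
  qed
  have "AE e in nu \<gamma> K. eventually (\<lambda>t. e \<in> space (nu \<gamma> K) - A t) sequentially"
  proof (rule borel_cantelli_AE1[OF A_sets _ summ])
    have fm: "finite_measure (nu \<gamma> K)" using law_ofD(1)[OF lnu] by (simp add: prob_space_def)
    show "emeasure (nu \<gamma> K) (A n) < \<infinity>" for n
      using finite_measure.emeasure_finite[OF fm] by (simp add: less_top)
  qed
  then show ?thesis
    by (rule AE_mp) (auto simp: A_def S_def cnt_map cnt_map' elim!: eventually_mono)
qed

lemma set_iidL: "es \<in> set_pmf (iidL p t) \<Longrightarrow> x \<in> set es \<Longrightarrow> x \<in> set_pmf p"
  by (induction t arbitrary: es) auto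

lemma explore_arms:
  assumes "K \<ge> 1"
  shows "AE e in nu \<gamma> K. \<forall>s. snd (e s) < K"
proof -
  have "AE e in nu \<gamma> K. snd (e s) < K" for s
  proof -
    have "AE e in nu \<gamma> K. (\<lambda>es. snd (es ! s) < K) (map e [0..<Suc s])"
    proof (rule law_AE[OF law_nu])
      fix es assume es: "es \<in> set_pmf (iidL (mu \<gamma> K) (Suc s))"
      then have "es ! s \<in> set es" using iidL_len[OF es] by simp
      then have "es ! s \<in> set_pmf (mu \<gamma> K)" using set_iidL[OF es] by blast
      moreover have "0 \<in> {..<K}" using assms by simp
      then have "{..<K} \<noteq> {}" by blast
      ultimately show "snd (es ! s) < K" by (auto simp: mu_def)
    qed
    then show ?thesis by (simp del: upt_Suc)
  qed
  then show ?thesis by (simp add: AE_all_countable)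
qed

lemma alg_arms:
  assumes "valid_alg K B"
  shows "AE \<omega> in Kerm B adv e. \<forall>m. \<omega> m < K"
proof -
  have "AE \<omega> in Kerm B adv e. \<omega> m < K" for m
  proof -
    have "AE \<omega> in Kerm B adv e. (\<lambda>h. h ! m < K) (map \<omega> [0..<Suc m])"
    proof (rule law_AE[OF law_Kerm])
      fix h assume "h \<in> set_pmf (map_pmf snd (bandit_run B (advE adv e) (Suc m)))"
      then obtain x where x: "x \<in> set_pmf (bandit_run B (advE adv e) (Suc m))" "h = snd x" by auto
      show "h ! m < K" using run_arms[OF assms x(1)] run_len[OF x(1)] x(2) by auto
    qed
    then show ?thesis by (simp del: upt_Suc)
  qed
  then show ?thesis by (simp add: AE_all_countable)
qed


lemma advE_step:
  assumes "\<not> fst (e t)"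
  shows "advE adv e (map \<omega> [0..<nae e t]) = adv (map (Phi e \<omega>) [0..<t])"
proof -
  have tau: "tauE e (length (map \<omega> [0..<nae e t])) = t" using assms by (intro tauE_eq) auto
  have "map (phiE e (map \<omega> [0..<nae e t])) [0..<t] = map (Phi e \<omega>) [0..<t]"
  proof (intro map_cong refl)
    fix s assume "s \<in> set [0..<t]"
    then have s: "s < t" by simp
    show "phiE e (map \<omega> [0..<nae e t]) s = Phi e \<omega> s"
    proof (cases "fst (e s)")
      case False
      then have "nae e s < nae e t" using s by (intro nae_strict)
      then show ?thesis using False by (simp add: phiE_def Phi_def)
    qed (simp add: phiE_def Phi_def)
  qed
  then show ?thesis by (intro ext) (simp only: advE_def tau)
qed

lemma Max_le_shift:
  fixes f g :: "nat \<Rightarrow> real"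
  assumes "finite A" "A \<noteq> {}" "\<And>k. k \<in> A \<Longrightarrow> f k \<le> g k + c"
  shows "Max (f ` A) \<le> Max (g ` A) + c"
proof -
  have "Max (f ` A) \<in> f ` A" using assms(1,2) by (intro Max_in) auto
  then obtain k where k: "k \<in> A" "Max (f ` A) = f k" by auto
  have "g k \<le> Max (g ` A)" using k(1) assms(1) by (intro Max_ge) auto
  then show ?thesis using k assms(3)[OF k(1)] by simp
qed

lemma Max_mono_pw:
  fixes f g :: "nat \<Rightarrow> real"
  assumes "finite A" "A \<noteq> {}" "\<And>k. k \<in> A \<Longrightarrow> f k \<le> g k"
  shows "Max (f ` A) \<le> Max (g ` A)"
  using Max_le_shift[OF assms(1,2), of f g 0] assms(3) by simp

context
  fixes K :: nat and adv :: "nat list \<Rightarrow> nat \<Rightarrow> real" and e :: "nat \<Rightarrow> bool \<times> nat" and \<omega> :: "nat \<Rightarrow> nat"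
  assumes vadv: "valid_adv K adv"
    and earms: "\<And>s. snd (e s) < K"
    and oarms: "\<And>m. \<omega> m < K"
begin

definition "Sx k t = (\<Sum>s<t. adv (map (Phi e \<omega>) [0..<s]) k)"
definition "Gx t = (\<Sum>s<t. adv (map (Phi e \<omega>) [0..<s]) (Phi e \<omega> s))"
definition "SA k n = (\<Sum>m<n. advE adv e (map \<omega> [0..<m]) k)"
definition "GA n = (\<Sum>m<n. advE adv e (map \<omega> [0..<m]) (\<omega> m))"

lemma adv01: "k < K \<Longrightarrow> 0 \<le> adv h k \<and> adv h k \<le> 1"
  using vadv unfolding valid_adv_def by blast

lemma Phi_lt: "Phi e \<omega> s < K"
  using earms oarms by (simp add: Phi_def)

lemma Sx_Suc: "Sx k (Suc t) = Sx k t + adv (map (Phi e \<omega>) [0..<t]) k" by (simp add: Sx_def)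
lemma Gx_Suc: "Gx (Suc t) = Gx t + adv (map (Phi e \<omega>) [0..<t]) (Phi e \<omega> t)" by (simp add: Gx_def)
lemma SA_Suc: "SA k (Suc n) = SA k n + advE adv e (map \<omega> [0..<n]) k" by (simp add: SA_def)
lemma GA_Suc: "GA (Suc n) = GA n + advE adv e (map \<omega> [0..<n]) (\<omega> n)" by (simp add: GA_def)

lemma sums_bound:
  "(\<forall>k<K. SA k (nae e t) \<le> Sx k t \<and> Sx k t \<le> SA k (nae e t) + real (nex e t)) \<and> GA (nae e t) \<le> Gx t"
proof (induction t)
  case 0 then show ?case by (simp add: Sx_def SA_def GA_def Gx_def)
next
  case (Suc t)
  show ?case
  proof (cases "fst (e t)")
    case True
    have g0: "0 \<le> adv (map (Phi e \<omega>) [0..<t]) (Phi e \<omega> t)" using adv01[OF Phi_lt] by blast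
    have n: "nae e (Suc t) = nae e t" "nex e (Suc t) = Suc (nex e t)" using True by (simp_all add: nae_Suc nex_Suc)
    show ?thesis
    proof (intro conjI allI impI)
      fix k assume k: "k < K"
      have a: "0 \<le> adv (map (Phi e \<omega>) [0..<t]) k" "adv (map (Phi e \<omega>) [0..<t]) k \<le> 1" using adv01[OF k] by auto
      have ih: "SA k (nae e t) \<le> Sx k t" "Sx k t \<le> SA k (nae e t) + real (nex e t)" using Suc.IH k by auto
      show "SA k (nae e (Suc t)) \<le> Sx k (Suc t)" unfolding n Sx_Suc using a ih by linarith
      show "Sx k (Suc t) \<le> SA k (nae e (Suc t)) + real (nex e (Suc t))" unfolding n Sx_Suc using a ih by simp
    next
      show "GA (nae e (Suc t)) \<le> Gx (Suc t)" unfolding n Gx_Suc using g0 Suc.IH by linarith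
    qed
  next
    case False
    have st: "advE adv e (map \<omega> [0..<nae e t]) = adv (map (Phi e \<omega>) [0..<t])" by (rule advE_step[where e=e and t=t and adv=adv and \<omega>=\<omega>, OF False])
    have pt: "Phi e \<omega> t = \<omega> (nae e t)" using False by (simp add: Phi_def)
    have n: "nae e (Suc t) = Suc (nae e t)" "nex e (Suc t) = nex e t" using False by (simp_all add: nae_Suc nex_Suc)
    show ?thesis
      unfolding n Sx_Suc Gx_Suc SA_Suc GA_Suc st pt using Suc.IH by auto
  qed
qed

lemma regret_bound:
  assumes K: "K \<ge> 1"
  shows "real t * avg_regret K adv (Phi e \<omega>) t \<le> real (nae e t) * avg_regret K (advE adv e) \<omega> (nae e t) + real (nex e t)"
proof -
  let ?n = "nae e t"
  have "0 \<in> {..<K}" using K by simp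
  then have ne: "{..<K} \<noteq> {}" by blast
  have l: "real t * avg_regret K adv (Phi e \<omega>) t \<le> Max ((\<lambda>k. Sx k t) ` {..<K}) - Gx t"
    unfolding avg_regret_def Sx_def Gx_def
    by (cases "t = 0") (simp_all add: ne)
  have r: "real ?n * avg_regret K (advE adv e) \<omega> ?n = Max ((\<lambda>k. SA k ?n) ` {..<K}) - GA ?n"
    unfolding avg_regret_def SA_def GA_def
    by (cases "?n = 0") (simp_all add: ne)
  have "Max ((\<lambda>k. Sx k t) ` {..<K}) \<le> Max ((\<lambda>k. SA k ?n) ` {..<K}) + real (nex e t)"
    using sums_bound[of t] ne by (intro Max_le_shift) auto
  moreover have "GA ?n \<le> Gx t" using sums_bound[of t] by blast
  ultimately show ?thesis using l r by linarith
qed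

end

lemma limsup_combine:
  fixes r a :: "nat \<Rightarrow> real" and n c :: "nat \<Rightarrow> nat"
  assumes A: "limsup (\<lambda>m. ereal (a m)) \<le> ereal \<epsilon>" and eps: "\<epsilon> \<ge> 0"
    and C: "\<And>\<delta>. \<delta> > 0 \<Longrightarrow> eventually (\<lambda>t. real (c t) < (\<gamma> + \<delta>) * real t) sequentially"
    and g1: "\<gamma> < 1"
    and bound: "\<And>t. real t * r t \<le> real (n t) * a (n t) + real (c t)"
    and nc: "\<And>t. n t + c t = t"
  shows "limsup (\<lambda>t. ereal (r t)) \<le> ereal (\<epsilon> + \<gamma>)"
proof (rule ereal_le_epsilon2)
  fix d :: real assume d: "0 < d"
  define \<delta> where "\<delta> = d / 2"
  have \<delta>: "\<delta> > 0" using d by (simp add: \<delta>_def)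
  have "eventually (\<lambda>m. ereal (a m) < ereal (\<epsilon> + \<delta>)) sequentially"
  proof (rule Limsup_lessD)
    have "ereal \<epsilon> < ereal (\<epsilon> + \<delta>)" using \<delta> by simp
    with A show "limsup (\<lambda>m. ereal (a m)) < ereal (\<epsilon> + \<delta>)" by (rule le_less_trans)
  qed
  then obtain N where N: "\<And>m. m \<ge> N \<Longrightarrow> a m < \<epsilon> + \<delta>" by (auto simp: eventually_sequentially)
  define \<eta> where "\<eta> = (1 - \<gamma>) / 2"
  have \<eta>: "\<eta> > 0" using g1 by (simp add: \<eta>_def)
  have ev1: "eventually (\<lambda>t. real (c t) < (\<gamma> + \<eta>) * real t) sequentially" by (rule C[OF \<eta>])
  have ev2: "eventually (\<lambda>t. real (c t) < (\<gamma> + \<delta>) * real t) sequentially" by (rule C[OF \<delta>])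
  have ev3: "eventually (\<lambda>t. real N \<le> \<eta> * real t) sequentially"
  proof -
    obtain T :: nat where T: "real N / \<eta> \<le> real T" using real_arch_simple by blast
    then have NT: "real N \<le> \<eta> * real T" using \<eta> by (simp add: pos_divide_le_eq mult.commute)
    have "real N \<le> \<eta> * real t" if "t \<ge> T" for t
    proof -
      have "\<eta> * real T \<le> \<eta> * real t" using that \<eta> by (intro mult_left_mono) auto
      then show ?thesis using NT by linarith
    qed
    then show ?thesis by (auto simp: eventually_sequentially)
  qed
  have "eventually (\<lambda>t. ereal (r t) \<le> ereal (\<epsilon> + \<gamma>) + ereal d) sequentially"
    using ev1 ev2 ev3 eventually_gt_at_top[of 0]
  proof eventually_elim
    case (elim t)
    have tpos: "real t > 0" using elim(4) by simp
    have "real (n t) = real t - real (c t)" using nc[of t] by (metis add_diff_cancel_right' of_nat_add)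
    then have "real (n t) > (1 - \<gamma> - \<eta>) * real t" using elim(1) by (simp add: algebra_simps)
    also have "(1 - \<gamma> - \<eta>) * real t = \<eta> * real t" unfolding \<eta>_def by (simp add: field_simps)
    finally have "n t \<ge> N" using elim(3) by simp
    then have an: "a (n t) < \<epsilon> + \<delta>" by (rule N)
    have "real (n t) * a (n t) \<le> real (n t) * (\<epsilon> + \<delta>)" using an by (intro mult_left_mono) auto
    also have "\<dots> \<le> real t * (\<epsilon> + \<delta>)" using nc[of t] eps \<delta> by (intro mult_right_mono) auto
    finally have "real t * r t \<le> real t * (\<epsilon> + \<delta>) + (\<gamma> + \<delta>) * real t"
      using bound[of t] elim(2) by linarith
    then have "real t * r t \<le> real t * (\<epsilon> + \<gamma> + d)" by (simp add: \<delta>_def algebra_simps)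
    then have "r t \<le> \<epsilon> + \<gamma> + d" using tpos by simp
    then show ?case by simp
  qed
  then show "limsup (\<lambda>t. ereal (r t)) \<le> ereal (\<epsilon> + \<gamma>) + ereal d" by (rule Limsup_bounded)
qed


lemma avg_regret_prefix:
  "avg_regret K adv x t = avg_regret K adv (\<lambda>s. map x [0..<t] ! s) t"
proof -
  have m: "map x [0..<s] = map (\<lambda>s. map x [0..<t] ! s) [0..<s]" if "s < t" for s
    using that by (intro map_cong refl) auto
  have "(\<Sum>s<t. adv (map x [0..<s]) k) = (\<Sum>s<t. adv (map (\<lambda>s. map x [0..<t] ! s) [0..<s]) k)" for k
  proof (rule sum.cong[OF refl])
    fix s assume "s \<in> {..<t}"
    then have ls: "s < t" by simp
    have eq: "map x [0..<s] = map (\<lambda>s. map x [0..<t] ! s) [0..<s]" by (rule m[OF ls])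
    show "adv (map x [0..<s]) k = adv (map (\<lambda>s. map x [0..<t] ! s) [0..<s]) k" by (simp only: eq)
  qed
  moreover have "(\<Sum>s<t. adv (map x [0..<s]) (x s)) = (\<Sum>s<t. adv (map (\<lambda>s. map x [0..<t] ! s) [0..<s]) (map x [0..<t] ! s))"
  proof (rule sum.cong[OF refl])
    fix s assume "s \<in> {..<t}"
    then have ls: "s < t" by simp
    have eq: "map x [0..<s] = map (\<lambda>s. map x [0..<t] ! s) [0..<s]" by (rule m[OF ls])
    have eq2: "x s = map x [0..<t] ! s" using ls by simp
    show "adv (map x [0..<s]) (x s) = adv (map (\<lambda>s. map x [0..<t] ! s) [0..<s]) (map x [0..<t] ! s)"
      by (simp only: eq flip: eq2)
  qed
  ultimately show ?thesis unfolding avg_regret_def by simp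
qed

lemma meas_avg_regret: "(\<lambda>x. avg_regret K adv x t) \<in> borel_measurable PSn"
proof -
  have "(\<lambda>x. avg_regret K adv (\<lambda>s. map x [0..<t] ! s) t) \<in> borel_measurable PSn"
    by (rule meas_via_prefix[where g="\<lambda>xs. avg_regret K adv (\<lambda>s. xs ! s) t"]) simp_all
  then show ?thesis by (subst avg_regret_prefix) 
qed

lemma pred_regret: "{x \<in> space PSn. limsup (\<lambda>t. ereal (avg_regret K adv x t)) \<le> ereal c} \<in> sets PSn"
proof -
  have "(\<lambda>x. limsup (\<lambda>t. ereal (avg_regret K adv x t))) \<in> borel_measurable PSn"
    by (intro borel_measurable_limsup borel_measurable_ereal meas_avg_regret)
  then show ?thesis by measurable
qed

lemma valid_advE: "valid_adv K adv \<Longrightarrow> valid_adv K (advE adv e)"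
  unfolding valid_adv_def advE_def by blast

lemma hannan_star:
  fixes A :: "nat \<Rightarrow> 's bandit_alg"
  assumes "0 \<le> \<epsilon>" and "0 < \<gamma>" and "\<gamma> < 1"
    and BA: "bandit_algorithm A" and HC: "hannan_consistent \<epsilon> A"
  shows "hannan_consistent (\<epsilon> + \<gamma>) (mod_alg \<gamma> A)"
  unfolding hannan_consistent_def
proof (intro allI impI)
  fix K adv and M :: "(nat \<Rightarrow> nat) measure"
  assume K: "1 \<le> K" and va: "valid_adv K adv"
    and law: "law_of M (\<lambda>t. map_pmf snd (bandit_run (mod_alg \<gamma> A K) adv t))"
  let ?B = "A K"
  have g01: "\<gamma> \<in> {0..1}" using assms by simp
  have Meq: "M = nu \<gamma> K \<bind> Lk ?B adv"
    using law_unique[OF law[unfolded mod_alg_def] law_Q] .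
  have AEQ: "AE x in nu \<gamma> K \<bind> Lk ?B adv. limsup (\<lambda>t. ereal (avg_regret K adv x t)) \<le> ereal (\<epsilon> + \<gamma>)"
  proof (subst AE_bind[OF measurable_prob_algebraD[OF meas_Lk]])
    show "Measurable.pred PSn (\<lambda>x. limsup (\<lambda>t. ereal (avg_regret K adv x t)) \<le> ereal (\<epsilon> + \<gamma>))"
      unfolding pred_def by (rule pred_regret)
    have slln: "AE e in nu \<gamma> K. \<forall>m::nat. eventually (\<lambda>t. real (nex e t) < (\<gamma> + 1 / real (Suc m)) * real t) sequentially"
      unfolding AE_all_countable by (intro allI slln_upper[OF g01]) simp
    show "AE e in nu \<gamma> K. AE x in Lk ?B adv e. limsup (\<lambda>t. ereal (avg_regret K adv x t)) \<le> ereal (\<epsilon> + \<gamma>)"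
      using slln explore_arms[OF K]
    proof (eventually_elim)
      case (elim e)
      note E = elim
      note lK = law_Kerm[of ?B adv e]
      have mPhi: "Phi e \<in> measurable (Kerm ?B adv e) PSn"
        by (subst measurable_cong_sets[OF law_ofD(2)[OF lK] refl]) (rule meas_Phi)
      have vA: "valid_alg K ?B" using BA K unfolding bandit_algorithm_def by blast
      have hyp: "AE \<omega> in Kerm ?B adv e. limsup (\<lambda>n. ereal (avg_regret K (advE adv e) \<omega> n)) \<le> ereal \<epsilon>"
        using HC K valid_advE[OF va] lK unfolding hannan_consistent_def by blast
      have "AE \<omega> in Kerm ?B adv e. limsup (\<lambda>t. ereal (avg_regret K adv (Phi e \<omega>) t)) \<le> ereal (\<epsilon> + \<gamma>)"
        using hyp alg_arms[OF vA]
      proof eventually_elim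
        case (elim \<omega>)
        show ?case
        proof (rule limsup_combine[where a="avg_regret K (advE adv e) \<omega>" and n="nae e" and c="nex e"])
          show "limsup (\<lambda>m. ereal (avg_regret K (advE adv e) \<omega> m)) \<le> ereal \<epsilon>" by (rule elim(1))
          show "0 \<le> \<epsilon>" "\<gamma> < 1" by fact+
          show "real t * avg_regret K adv (Phi e \<omega>) t \<le> real (nae e t) * avg_regret K (advE adv e) \<omega> (nae e t) + real (nex e t)" for t
            by (rule regret_bound[OF va _ _ K]) (use elim E(2) in auto)
          show "nae e t + nex e t = t" for t using nex_nae[of e t] by simp
          fix \<delta> :: real assume \<delta>: "\<delta> > 0"
          obtain m :: nat where m: "1 / real (Suc m) < \<delta>"
            using \<delta> by (metis nat_approx_posE)
          have "eventually (\<lambda>t. real (nex e t) < (\<gamma> + 1 / real (Suc m)) * real t) sequentially"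
            using E(1) by blast
          then show "eventually (\<lambda>t. real (nex e t) < (\<gamma> + \<delta>) * real t) sequentially"
          proof (rule eventually_mono)
            fix t assume "real (nex e t) < (\<gamma> + 1 / real (Suc m)) * real t"
            moreover have "(\<gamma> + 1 / real (Suc m)) * real t \<le> (\<gamma> + \<delta>) * real t"
              using m by (intro mult_right_mono) auto
            ultimately show "real (nex e t) < (\<gamma> + \<delta>) * real t" by linarith
          qed
        qed
      qed
      then show ?case
        unfolding Lk_def by (subst AE_distr_iff[OF mPhi pred_regret])
    qed
  qed
  show "AE x in M. limsup (\<lambda>t. ereal (avg_regret K adv x t)) \<le> ereal (\<epsilon> + \<gamma>)"
    unfolding Meq by (rule AEQ)
qed


lemma pmf_explore_sel:
  assumes "0 \<le> \<gamma>" "\<gamma> \<le> 1" "i < K"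
  shows "pmf (map_pmf snd (alg_sel (explore_alg \<gamma> K B) s)) i \<ge> \<gamma> / real K"
proof -
  obtain s0 b where s: "s = (s0, b)" by fastforce
  have ne: "{..<K} \<noteq> {}" using assms by auto
  have "map_pmf snd (alg_sel (explore_alg \<gamma> K B) s) =
        bind_pmf (bernoulli_pmf \<gamma>) (\<lambda>e. if e then pmf_of_set {..<K} else map_pmf snd (alg_sel B s0))"
    by (auto simp: explore_alg_def s map_bind_pmf map_pmf_comp split_beta intro!: bind_pmf_cong)
  then have "pmf (map_pmf snd (alg_sel (explore_alg \<gamma> K B) s)) i =
      pmf (pmf_of_set {..<K}) i * \<gamma> + pmf (map_pmf snd (alg_sel B s0)) i * (1 - \<gamma>)"
    using assms by (simp add: pmf_bind)
  moreover have "pmf (pmf_of_set {..<K}) i = 1 / real K" using assms ne by simp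
  moreover have "0 \<le> pmf (map_pmf snd (alg_sel B s0)) i * (1 - \<gamma>)" using assms by simp
  ultimately show ?thesis by simp
qed

lemma game_len: "x \<in> set_pmf (game_run A1 A2 u1 u2 t) \<Longrightarrow> length (snd x) = t"
  by (induction t arbitrary: x) (auto simp: game_step_def split: prod.splits)

lemma set_game_step: "x' \<in> set_pmf (game_step A1 A2 u1 u2 sh) \<Longrightarrow> \<exists>a b. snd x' = snd sh @ [(a, b)]"
  by (auto simp: game_step_def split: prod.splits)

lemma game_step_last:
  "map_pmf (\<lambda>x'. snd x' ! length (snd sh)) (game_step A1 A2 u1 u2 sh)
   = pair_pmf (map_pmf snd (alg_sel A1 (fst (fst sh)))) (map_pmf snd (alg_sel A2 (snd (fst sh))))"
  unfolding game_step_def pair_pmf_def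
  by (simp add: map_bind_pmf bind_map_pmf map_pmf_comp nth_append split_beta)

locale explore_game =
  fixes \<gamma> :: real and K1 K2 :: nat and B1 B2 :: "'s bandit_alg" and u1 u2 :: "nat \<Rightarrow> nat \<Rightarrow> real"
    and i j :: nat
  assumes g: "0 < \<gamma>" "\<gamma> < 1" and ij: "i < K1" "j < K2"
begin

abbreviation "A1 \<equiv> explore_alg \<gamma> K1 B1"
abbreviation "A2 \<equiv> explore_alg \<gamma> K2 B2"
definition "p = (\<gamma> / real K1) * (\<gamma> / real K2)"

lemma p_pos: "0 < p" and p_le: "p \<le> 1"
proof -
  have "K1 \<ge> 1" "K2 \<ge> 1" using ij by auto
  then have a: "\<gamma> / real K1 \<le> 1" "\<gamma> / real K2 \<le> 1" using g by (auto simp: divide_le_eq)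
  have b: "0 < \<gamma> / real K1" "0 < \<gamma> / real K2" using g ij by auto
  show "0 < p" unfolding p_def by (rule mult_pos_pos[OF b])
  show "p \<le> 1" unfolding p_def by (rule mult_le_one[OF a(1) _ a(2)]) (use b in simp)
qed

lemma step_bound:
  "emeasure (measure_pmf (game_step A1 A2 u1 u2 sh)) {x'. snd x' ! length (snd sh) \<noteq> (i, j)} \<le> ennreal (1 - p)"
proof -
  let ?f = "\<lambda>x'. snd x' ! length (snd sh)"
  let ?Q = "pair_pmf (map_pmf snd (alg_sel A1 (fst (fst sh)))) (map_pmf snd (alg_sel A2 (snd (fst sh))))"
  have "emeasure (measure_pmf (game_step A1 A2 u1 u2 sh)) {x'. ?f x' \<noteq> (i, j)}
      = emeasure (measure_pmf (map_pmf ?f (game_step A1 A2 u1 u2 sh))) (UNIV - {(i, j)})"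
    by (simp add: vimage_def)
  also have "\<dots> = emeasure (measure_pmf ?Q) (UNIV - {(i, j)})" by (simp only: game_step_last)
  also have "\<dots> = ennreal (1 - pmf ?Q (i, j))"
  proof -
    have "measure_pmf.prob ?Q (UNIV - {(i, j)}) = 1 - pmf ?Q (i, j)"
      using measure_pmf.prob_compl[of "{(i, j)}" ?Q] by (simp add: measure_pmf_single)
    then show ?thesis by (simp add: measure_pmf.emeasure_eq_measure)
  qed
  also have "\<dots> \<le> ennreal (1 - p)"
  proof (intro ennreal_leI)
    have "pmf ?Q (i, j) \<ge> p"
      unfolding pmf_pair p_def using g ij
      by (intro mult_mono pmf_explore_sel) auto
    then show "1 - pmf ?Q (i, j) \<le> 1 - p" by simp
  qed
  finally show ?thesis .
qed

definition "Ev n m = {h :: (nat \<times> nat) list. \<forall>t\<in>{n..<n+m}. h ! t \<noteq> (i, j)}"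

lemma run_bound:
  "emeasure (measure_pmf (game_run A1 A2 u1 u2 (n + m))) {x. snd x \<in> Ev n m} \<le> ennreal ((1 - p) ^ m)"
proof (induction m)
  case 0 then show ?case by (simp add: measure_pmf.emeasure_le_1)
next
  case (Suc m)
  let ?R = "game_run A1 A2 u1 u2 (n + m)"
  have "emeasure (measure_pmf (game_run A1 A2 u1 u2 (n + Suc m))) {x. snd x \<in> Ev n (Suc m)}
      = (\<integral>\<^sup>+x. emeasure (measure_pmf (game_step A1 A2 u1 u2 x)) {x. snd x \<in> Ev n (Suc m)} \<partial>measure_pmf ?R)"
    by simp
  also have "\<dots> \<le> (\<integral>\<^sup>+x. ennreal (1 - p) * indicator {x. snd x \<in> Ev n m} x \<partial>measure_pmf ?R)"
  proof (rule nn_integral_mono_AE)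
    show "AE x in measure_pmf ?R. emeasure (measure_pmf (game_step A1 A2 u1 u2 x)) {x. snd x \<in> Ev n (Suc m)}
              \<le> ennreal (1 - p) * indicator {x. snd x \<in> Ev n m} x"
      unfolding AE_measure_pmf_iff
    proof
      fix x assume x: "x \<in> set_pmf ?R"
      have len: "length (snd x) = n + m" by (rule game_len[OF x])
      let ?S = "measure_pmf (game_step A1 A2 u1 u2 x)"
      have sub: "{x'. snd x' \<in> Ev n (Suc m)} \<inter> set_pmf (game_step A1 A2 u1 u2 x)
           \<subseteq> (if snd x \<in> Ev n m then {x'. snd x' ! length (snd x) \<noteq> (i, j)} else {})"
      proof
        fix x' assume x': "x' \<in> {x'. snd x' \<in> Ev n (Suc m)} \<inter> set_pmf (game_step A1 A2 u1 u2 x)"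
        then obtain a b where ab: "snd x' = snd x @ [(a, b)]" using set_game_step by blast
        have H: "\<forall>t\<in>{n..<n + Suc m}. (snd x @ [(a, b)]) ! t \<noteq> (i, j)" using x' ab by (simp add: Ev_def)
        have "snd x \<in> Ev n m"
          unfolding Ev_def mem_Collect_eq
        proof (rule ballI)
          fix t assume t: "t \<in> {n..<n + m}"
          then have "(snd x @ [(a, b)]) ! t \<noteq> (i, j)" using H by auto
          then show "snd x ! t \<noteq> (i, j)" using t len by (simp add: nth_append)
        qed
        moreover have "snd x' ! length (snd x) \<noteq> (i, j)"
          using H len ab by auto
        ultimately have "snd x \<in> Ev n m \<and> snd x' ! length (snd x) \<noteq> (i, j)" by simp
        then show "x' \<in> (if snd x \<in> Ev n m then {x'. snd x' ! length (snd x) \<noteq> (i, j)} else {})" by simp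
      qed
      have "emeasure ?S {x'. snd x' \<in> Ev n (Suc m)} = emeasure ?S ({x'. snd x' \<in> Ev n (Suc m)} \<inter> set_pmf (game_step A1 A2 u1 u2 x))"
        by (simp add: emeasure_Int_set_pmf)
      also have "\<dots> \<le> emeasure ?S (if snd x \<in> Ev n m then {x'. snd x' ! length (snd x) \<noteq> (i, j)} else {})"
        by (rule emeasure_mono[OF sub]) simp
      also have "\<dots> \<le> ennreal (1 - p) * indicator {x. snd x \<in> Ev n m} x"
        using step_bound[of x] by (simp add: indicator_def)
      finally show "emeasure ?S {x. snd x \<in> Ev n (Suc m)} \<le> ennreal (1 - p) * indicator {x. snd x \<in> Ev n m} x" .
    qed
  qed
  also have "\<dots> = ennreal (1 - p) * emeasure (measure_pmf ?R) {x. snd x \<in> Ev n m}"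
    by (simp add: nn_integral_cmult_indicator)
  also have "\<dots> \<le> ennreal (1 - p) * ennreal ((1 - p) ^ m)"
    by (intro mult_left_mono Suc.IH) simp
  also have "\<dots> = ennreal ((1 - p) ^ Suc m)"
    using p_le by (simp add: ennreal_mult[symmetric])
  finally show ?case .
qed

lemma explore_AE:
  assumes law: "law_of M (\<lambda>t. map_pmf snd (game_run A1 A2 u1 u2 t))"
  shows "AE \<omega> in M. infinite {t. \<omega> t = (i, j)}"
proof -
  have "AE \<omega> in M. \<exists>t\<ge>n. \<omega> t = (i, j)" for n
  proof -
    define Bs where "Bs m = {\<omega>::nat \<Rightarrow> nat \<times> nat. map \<omega> [0..<n + m] \<in> Ev n m}" for m
    define B where "B = (\<Inter>m. Bs m)"
    have Bs_sets: "Bs m \<in> sets M" for m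
    proof -
      have "(\<lambda>\<omega>. map \<omega> [0..<n + m]) -` Ev n m \<inter> space M \<in> sets M"
        by (rule measurable_sets[OF law_meas_prefix[OF law]]) simp
      then show ?thesis using law_ofD(3)[OF law] by (simp add: Bs_def vimage_def)
    qed
    have B_sets: "B \<in> sets M" unfolding B_def using Bs_sets by auto
    have fm: "finite_measure M" using law_ofD(1)[OF law] by (simp add: prob_space_def)
    have mB: "measure M B \<le> (1 - p) ^ m" for m
    proof -
      have "emeasure M (Bs m) = emeasure (measure_pmf (map_pmf snd (game_run A1 A2 u1 u2 (n + m)))) (Ev n m)"
        unfolding Bs_def by (rule law_emeasure[OF law])
      also have "\<dots> \<le> ennreal ((1 - p) ^ m)" using run_bound[of n m] by (simp add: vimage_def)
      finally have "emeasure M B \<le> ennreal ((1 - p) ^ m)"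
        using emeasure_mono[of B "Bs m" M] Bs_sets unfolding B_def by (meson INF_lower UNIV_I order_trans)
      then show ?thesis using p_le
        by (simp add: finite_measure.emeasure_eq_measure[OF fm])
    qed
    have "(\<lambda>m. (1 - p) ^ m) \<longlonglongrightarrow> 0" using p_pos p_le by (intro LIMSEQ_power_zero) auto
    then have "measure M B \<le> 0" using mB by (intro LIMSEQ_le_const) auto
    then have "measure M B = 0" by (simp add: measure_nonneg antisym)
    then have "B \<in> null_sets M"
      using B_sets finite_measure.emeasure_eq_measure[OF fm] by (simp add: null_sets_def)
    moreover have "{\<omega> \<in> space M. \<not> (\<exists>t\<ge>n. \<omega> t = (i, j))} \<subseteq> B"
      by (auto simp: B_def Bs_def Ev_def)
    ultimately show ?thesis by (rule AE_I')
  qed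
  then have "AE \<omega> in M. \<forall>n. \<exists>t\<ge>n. \<omega> t = (i, j)" by (simp add: AE_all_countable)
  then show ?thesis by (rule AE_mp) (auto simp: infinite_nat_iff_unbounded_le intro!: AE_I2)
qed

end

lemma guaranteed_star:
  fixes A :: "nat \<Rightarrow> 's bandit_alg"
  assumes "0 < \<gamma>" "\<gamma> < 1"
  shows "guaranteed_exploration (mod_alg \<gamma> A)"
  unfolding guaranteed_exploration_def
proof (intro allI impI)
  fix K1 K2 u1 u2 and M :: "(nat \<Rightarrow> nat \<times> nat) measure"
  assume K1: "1 \<le> K1" and K2: "1 \<le> K2"
    and law: "law_of M (\<lambda>t. map_pmf snd (game_run (mod_alg \<gamma> A K1) (mod_alg \<gamma> A K2) u1 u2 t))"
  have inf: "AE \<omega> in M. infinite {t. \<omega> t = (i, j)}" if "i < K1" "j < K2" for i j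
  proof -
    interpret explore_game \<gamma> K1 K2 "A K1" "A K2" u1 u2 i j
      using assms that by unfold_locales auto
    show ?thesis by (rule explore_AE) (use law in \<open>simp add: mod_alg_def\<close>)
  qed
  have "AE \<omega> in M. i < K1 \<longrightarrow> j < K2 \<longrightarrow> infinite {t. \<omega> t = (i, j)}" for i j
  proof (cases "i < K1 \<and> j < K2")
    case True
    then have "AE \<omega> in M. infinite {t. \<omega> t = (i, j)}" using inf by blast
    then show ?thesis by (rule eventually_mono) simp
  next
    case False
    then show ?thesis by (intro AE_I2) auto
  qed
  then have "AE \<omega> in M. \<forall>i. \<forall>j. i < K1 \<longrightarrow> j < K2 \<longrightarrow> infinite {t. \<omega> t = (i, j)}"
    by (simp add: AE_all_countable)
  then show "AE \<omega> in M. \<forall>i<K1. \<forall>j<K2. infinite {t. \<omega> t = (i, j)}" by simp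
qed

lemma valid_star:
  assumes "bandit_algorithm A"
  shows "bandit_algorithm (mod_alg \<gamma> A)"
  unfolding bandit_algorithm_def
proof (intro allI impI)
  fix K :: nat assume K: "1 \<le> K"
  have "0 \<in> {..<K}" using K by simp
  then have ne: "{..<K} \<noteq> {}" by blast
  have v: "valid_alg K (A K)" using assms K unfolding bandit_algorithm_def by blast
  show "valid_alg K (mod_alg \<gamma> A K)"
    using v ne unfolding valid_alg_def mod_alg_def explore_alg_def
    by (auto split: prod.splits if_splits)
qed


theorem lemma2:
  fixes \<epsilon> \<gamma> :: real and A :: "nat \<Rightarrow> 's bandit_alg"
  assumes "0 \<le> \<epsilon>" and "0 < \<gamma>" and "\<gamma> < 1"
    and "bandit_algorithm A" and "hannan_consistent \<epsilon> A"
  shows "bandit_algorithm (mod_alg \<gamma> A)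
         \<and> hannan_consistent (\<epsilon> + \<gamma>) (mod_alg \<gamma> A)
         \<and> guaranteed_exploration (mod_alg \<gamma> A)"
  using valid_star[OF assms(4)] hannan_star[OF assms(1,2,3,4,5)] guaranteed_star[OF assms(2,3)] by blast

end
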